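(* Let $\mu$ be a $\mathbb C$-Carleson measure. Then $H_\mu$ is not strictly positive if and only if there exists a countable set $N\subseteq\mathbb R_+$ with $\sum_{\lambda\in N}\frac{\lambda}{(\lambda+1)^2}<\infty$ such that $\mu(\mathbb R_+\setminus N)=0$.
   Context: $\mathbb R_+=(0,\infty)$. $H^2(\mathbb C_+)$ is the Hardy space of holomorphic $f:\mathbb C_+\to\mathbb C$ with $\sup_{y>0}\int|f(x+iy)|^2dx<\infty$. A $\mathbb C$-Carleson measure is a positive measure $\mu$ on $\mathbb R_+$ such that $(f,g)\mapsto\int_{\mathbb R_+}\overline{f(i\lambda)}g(i\lambda)\,d\mu(\lambda)$ is a continuous sesquilinear form on $H^2(\mathbb C_+)$; $H_\mu$ is the bounded operator representing it. $H_\mu$ is strictly positive if $\langle f,H_\mu f\rangle>0$ for all $f\ne0$. *)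

theory Defs
  imports "HOL-Complex_Analysis.Complex_Analysis"
begin

definition upper_half :: "complex set" where
  "upper_half = {z. 0 < Im z}"

definition H2_sqnorm :: "(complex \<Rightarrow> complex) \<Rightarrow> ennreal" where
  "H2_sqnorm f = (SUP y\<in>{0<..}. \<integral>\<^sup>+ x. ennreal ((cmod (f (Complex x y)))\<^sup>2) \<partial>lborel)"

text \<open>Hardy space H2 of the upper half plane (values outside the half plane are irrelevant).\<close>
definition H2 :: "(complex \<Rightarrow> complex) set" where
  "H2 = {f. f holomorphic_on upper_half \<and> H2_sqnorm f < \<infinity>}"

definition H2_norm :: "(complex \<Rightarrow> complex) \<Rightarrow> real" where
  "H2_norm f = sqrt (enn2real (H2_sqnorm f))"

text \<open>An element of H2 is zero iff it vanishes on the upper half plane.\<close>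
definition H2_nonzero :: "(complex \<Rightarrow> complex) \<Rightarrow> bool" where
  "H2_nonzero f \<longleftrightarrow> (\<exists>z\<in>upper_half. f z \<noteq> 0)"

definition carleson_form :: "real measure \<Rightarrow> (complex \<Rightarrow> complex) \<Rightarrow> (complex \<Rightarrow> complex) \<Rightarrow> complex" where
  "carleson_form M f g = (\<integral> l. cnj (f (Complex 0 l)) * g (Complex 0 l) \<partial>M)"

definition measure_on_Rplus :: "real measure \<Rightarrow> bool" where
  "measure_on_Rplus M \<longleftrightarrow> sets M = sets (restrict_space borel {0<..})"

definition C_Carleson :: "real measure \<Rightarrow> bool" where
  "C_Carleson M \<longleftrightarrow> measure_on_Rplus M \<and>
     (\<forall>f\<in>H2. \<forall>g\<in>H2. integrable M (\<lambda>l. cnj (f (Complex 0 l)) * g (Complex 0 l))) \<and>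
     (\<exists>C. \<forall>f\<in>H2. \<forall>g\<in>H2. cmod (carleson_form M f g) \<le> C * H2_norm f * H2_norm g)"

text \<open>H_mu strictly positive: <f, H_mu f> = form(f,f) > 0 for all nonzero f in H2.
  Since H_mu is the operator representing the form, <f, H_mu f> is by definition form(f,f).\<close>
definition H_strictly_positive :: "real measure \<Rightarrow> bool" where
  "H_strictly_positive M \<longleftrightarrow>
     (\<forall>f\<in>H2. H2_nonzero f \<longrightarrow> (\<exists>r>0. carleson_form M f f = complex_of_real r))"

end

theory Submission
  imports Defs "HOL-Probability.Sinc_Integral"
begin

lemma upper_half_open: "open upper_half"
  unfolding upper_half_def using open_halfspace_Im_gt[of 0] by simp

lemma upper_half_convex: "convex upper_half"
  unfolding upper_half_def using convex_halfspace_Im_gt[of 0] by simp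

lemma inv_1_sq_finite: "(\<integral>\<^sup>+x. ennreal (inverse (1 + (x::real)\<^sup>2)) \<partial>lborel) < \<infinity>"
proof -
  have e: "einterval (-\<infinity>) \<infinity> = (UNIV :: real set)" by (auto simp: einterval_def)
  have ii: "integrable lborel (\<lambda>x::real. inverse (1 + x\<^sup>2))"
    using integrable_inverse_1_plus_square unfolding set_integrable_def e by simp
  have fin: "(\<integral>\<^sup>+x. ennreal (norm (inverse (1 + (x::real)\<^sup>2))) \<partial>lborel) < \<infinity>"
    by (rule conjunct2[OF integrable_iff_bounded[THEN iffD1, OF ii]])
  have eq: "(\<lambda>x::real. ennreal (norm (inverse (1 + x\<^sup>2)))) = (\<lambda>x. ennreal (inverse (1 + x\<^sup>2)))"
  proof (rule ext)
    fix x :: real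
    have "0 < 1 + x\<^sup>2" by (simp add: add_pos_nonneg)
    then have "norm (inverse (1 + x\<^sup>2)) = inverse (1 + x\<^sup>2)" by simp
    then show "ennreal (norm (inverse (1 + x\<^sup>2))) = ennreal (inverse (1 + x\<^sup>2))" by simp
  qed
  show ?thesis using fin unfolding eq .
qed

lemma H2_of_bounded:
  assumes hol: "P holomorphic_on upper_half" and bd: "\<And>z. z \<in> upper_half \<Longrightarrow> cmod (P z) \<le> 1"
  shows "(\<lambda>z. P z / (z + \<i>)) \<in> H2"
proof -
  have nz: "z + \<i> \<noteq> 0" if "z \<in> upper_half" for z
  proof
    assume "z + \<i> = 0"
    then have "Im (z + \<i>) = 0" by simp
    with that show False by (simp add: upper_half_def)
  qed
  have "(\<lambda>z. P z / (z + \<i>)) holomorphic_on upper_half"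
    using hol nz by (intro holomorphic_intros) auto
  moreover have "H2_sqnorm (\<lambda>z. P z / (z + \<i>)) < \<infinity>"
  proof -
    have "H2_sqnorm (\<lambda>z. P z / (z + \<i>)) \<le> (\<integral>\<^sup>+x. ennreal (inverse (1 + (x::real)\<^sup>2)) \<partial>lborel)"
      unfolding H2_sqnorm_def
    proof (rule SUP_least, rule nn_integral_mono)
      fix y :: real and x :: real
      assume y: "y \<in> {0<..}"
      define w where "w = Complex x y"
      have wU: "w \<in> upper_half" using y by (simp add: w_def upper_half_def)
      have n1: "(cmod (w + \<i>))\<^sup>2 = x\<^sup>2 + (y + 1)\<^sup>2"
        by (simp add: w_def cmod_power2)
      have "(y + 1)\<^sup>2 \<ge> 1" using y by (simp add: power2_eq_square) (smt (verit) mult_less_cancel_left1)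
      then have n2: "(cmod (w + \<i>))\<^sup>2 \<ge> 1 + x\<^sup>2" using n1 by simp
      have p: "(cmod (P w))\<^sup>2 \<le> 1" using bd[OF wU] by (simp add: power_le_one)
      have "(cmod (P w / (w + \<i>)))\<^sup>2 = (cmod (P w))\<^sup>2 / (cmod (w + \<i>))\<^sup>2"
        by (simp add: norm_divide power_divide)
      also have "\<dots> \<le> 1 / (cmod (w + \<i>))\<^sup>2"
        using p by (intro divide_right_mono) auto
      also have "\<dots> \<le> 1 / (1 + x\<^sup>2)"
      proof -
        have pos: "0 < 1 + x\<^sup>2" by (simp add: add_pos_nonneg)
        then have "0 < (cmod (w + \<i>))\<^sup>2" using n2 by linarith
        then show ?thesis using n2 pos by (intro divide_left_mono) (auto intro!: mult_pos_pos)
      qed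
      finally show "ennreal ((cmod (P (Complex x y) / (Complex x y + \<i>)))\<^sup>2) \<le> ennreal (inverse (1 + x\<^sup>2))"
        by (simp add: w_def divide_inverse ennreal_leI)
    qed
    then show ?thesis using inv_1_sq_finite by (simp add: order_le_less_trans)
  qed
  ultimately show ?thesis by (simp add: H2_def)
qed

definition bfac :: "real \<Rightarrow> complex \<Rightarrow> complex" where
  "bfac l z = (if l \<le> 1 then (z - \<i> * of_real l) / (z + \<i> * of_real l)
               else (\<i> * of_real l - z) / (z + \<i> * of_real l))"

lemma bfac_den:
  assumes "0 < l" "0 < Im z"
  shows "cmod (z + \<i> * of_real l) \<ge> Im z + l"
proof -
  have "Im (z + \<i> * of_real l) = Im z + l" by simp
  moreover have "\<bar>Im (z + \<i> * of_real l)\<bar> \<le> cmod (z + \<i> * of_real l)" by (rule abs_Im_le_cmod)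
  ultimately show ?thesis using assms by simp
qed

lemma bfac_den_nz:
  assumes "0 < l" "0 < Im z"
  shows "z + \<i> * of_real l \<noteq> 0"
  using bfac_den[OF assms] assms by auto

lemma bfac_le1:
  assumes "0 < l" "0 < Im z"
  shows "cmod (bfac l z) \<le> 1"
proof -
  have d: "cmod (z + \<i> * of_real l) > 0" using bfac_den[OF assms] assms by linarith
  have e1: "(cmod (z - \<i> * of_real l))\<^sup>2 = (Re z)\<^sup>2 + (Im z - l)\<^sup>2" by (simp add: cmod_power2)
  have e2: "(cmod (z + \<i> * of_real l))\<^sup>2 = (Re z)\<^sup>2 + (Im z + l)\<^sup>2" by (simp add: cmod_power2)
  have "0 < Im z * l" using assms by simp
  then have "(Im z - l)\<^sup>2 \<le> (Im z + l)\<^sup>2" by (simp add: power2_eq_square algebra_simps)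
  then have "(cmod (z - \<i> * of_real l))\<^sup>2 \<le> (cmod (z + \<i> * of_real l))\<^sup>2"
    unfolding e1 e2 by simp
  then have a: "cmod (z - \<i> * of_real l) \<le> cmod (z + \<i> * of_real l)"
    by (simp add: power2_le_iff_abs_le)
  have b: "cmod (\<i> * of_real l - z) = cmod (z - \<i> * of_real l)" by (rule norm_minus_commute)
  show ?thesis using a b d by (simp add: bfac_def norm_divide)
qed

lemma bfac_diff:
  assumes l: "0 < l" and z: "0 < Im z"
  shows "cmod (bfac l z - 1) \<le> 8 * (1 / Im z + cmod z) * (l / (l + 1)\<^sup>2)"
proof -
  have den: "cmod (z + \<i> * of_real l) \<ge> Im z + l" by (rule bfac_den[OF l z])
  have nz: "z + \<i> * of_real l \<noteq> 0" by (rule bfac_den_nz[OF l z])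
  have l1: "(l + 1)\<^sup>2 > 0" using l by simp
  have dpos: "cmod (z + \<i> * of_real l) > 0" using den l z by linarith
  show ?thesis
  proof (cases "l \<le> 1")
    case True
    have "bfac l z - 1 = - (2 * \<i> * of_real l) / (z + \<i> * of_real l)"
      using True nz by (simp add: bfac_def field_simps)
    then have "cmod (bfac l z - 1) = 2 * l / cmod (z + \<i> * of_real l)"
      using l by (simp add: norm_divide norm_mult)
    also have "\<dots> \<le> 2 * l / Im z"
      using den l z dpos by (intro divide_left_mono) (auto intro!: mult_pos_pos)
    also have "\<dots> \<le> 8 * (1 / Im z) * (l / (l + 1)\<^sup>2)"
    proof -
      have "(l + 1)\<^sup>2 \<le> 2\<^sup>2" using True l by (intro power_mono) auto
      then have "2 * (l + 1)\<^sup>2 \<le> 8" by simp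
      then have "l * (2 * (l + 1)\<^sup>2) \<le> l * 8" using l by (intro mult_left_mono) auto
      then have "2 * l * (l + 1)\<^sup>2 \<le> 8 * l" by (simp add: algebra_simps)
      then show ?thesis using l z l1 by (simp add: field_simps)
    qed
    also have "\<dots> \<le> 8 * (1 / Im z + cmod z) * (l / (l + 1)\<^sup>2)"
      using l z l1 by (intro mult_right_mono mult_left_mono) auto
    finally show ?thesis .
  next
    case False
    have "bfac l z - 1 = - (2 * z) / (z + \<i> * of_real l)"
      using False nz by (simp add: bfac_def field_simps)
    then have "cmod (bfac l z - 1) = 2 * cmod z / cmod (z + \<i> * of_real l)"
      by (simp add: norm_divide norm_mult)
    also have "\<dots> \<le> 2 * cmod z / l"
      using den l z dpos by (intro divide_left_mono) (auto intro!: mult_pos_pos)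
    also have "\<dots> \<le> 8 * cmod z * (l / (l + 1)\<^sup>2)"
    proof -
      have "(l + 1)\<^sup>2 \<le> (2 * l)\<^sup>2" using False l by (intro power_mono) auto
      then have "(l + 1)\<^sup>2 \<le> 4 * l\<^sup>2" by (simp add: power_mult_distrib)
      then have "(2 * cmod z) * (l + 1)\<^sup>2 \<le> (2 * cmod z) * (4 * l\<^sup>2)"
        by (intro mult_left_mono) auto
      then have "2 * cmod z * (l + 1)\<^sup>2 \<le> 8 * cmod z * l\<^sup>2" by (simp add: algebra_simps)
      then show ?thesis using l l1 by (simp add: field_simps power2_eq_square)
    qed
    also have "\<dots> \<le> 8 * (1 / Im z + cmod z) * (l / (l + 1)\<^sup>2)"
      using l z l1 by (intro mult_right_mono mult_left_mono) auto
    finally show ?thesis .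
  qed
qed

lemma bfac_zero: "bfac l (Complex 0 l) = 0"
proof -
  have "Complex 0 l = \<i> * of_real l" by (simp add: complex_eq_iff)
  then show ?thesis by (simp add: bfac_def)
qed

lemma bfac_nonzero:
  assumes "Re z \<noteq> 0"
  shows "bfac l z \<noteq> 0"
proof -
  have "z - \<i> * of_real l \<noteq> 0" "\<i> * of_real l - z \<noteq> 0" "z + \<i> * of_real l \<noteq> 0"
    using assms by (auto simp: complex_eq_iff)
  then show ?thesis by (simp add: bfac_def)
qed

lemma bfac_hol:
  assumes "0 < l"
  shows "bfac l holomorphic_on upper_half"
proof -
  have nz: "z + \<i> * of_real l \<noteq> 0" if "z \<in> upper_half" for z
    using bfac_den_nz[OF assms] that by (simp add: upper_half_def)
  show ?thesis
  proof (cases "l \<le> 1")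
    case True
    then have e: "bfac l = (\<lambda>z. (z - \<i> * of_real l) / (z + \<i> * of_real l))"
      by (auto simp: bfac_def fun_eq_iff)
    show ?thesis unfolding e using nz by (intro holomorphic_intros) auto
  next
    case False
    then have e: "bfac l = (\<lambda>z. (\<i> * of_real l - z) / (z + \<i> * of_real l))"
      by (auto simp: bfac_def fun_eq_iff)
    show ?thesis unfolding e using nz by (intro holomorphic_intros) auto
  qed
qed

lemma w_nonneg: "0 < (l::real) \<Longrightarrow> 0 \<le> l / (l + 1)\<^sup>2" by simp

lemma B_inf:
  fixes g :: "nat \<Rightarrow> real"
  assumes gpos: "\<And>n. 0 < g n" and sg: "summable (\<lambda>n. g n / (g n + 1)\<^sup>2)"
  shows "\<exists>P. P holomorphic_on upper_half \<and> (\<forall>z\<in>upper_half. cmod (P z) \<le> 1) \<and>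
             P (Complex 1 1) \<noteq> 0 \<and> (\<forall>n. P (Complex 0 (g n)) = 0)"
proof -
  define Pn where "Pn n z = (\<Prod>k<n. bfac (g k) z)" for n z
  define P where "P z = lim (\<lambda>n. Pn n z)" for z
  have conv: "uniform_limit (cball z0 (Im z0 / 2)) Pn P sequentially" if z0: "z0 \<in> upper_half" for z0
  proof -
    define r where "r = Im z0 / 2"
    have r: "0 < r" using z0 by (simp add: r_def upper_half_def)
    define C where "C = 8 * (2 / Im z0 + (cmod z0 + r))"
    have inK: "Im z0 / 2 \<le> Im z \<and> cmod z \<le> cmod z0 + r" if "z \<in> cball z0 r" for z
    proof -
      have d: "cmod (z0 - z) \<le> r" using that by (simp add: dist_norm)
      have "\<bar>Im (z0 - z)\<bar> \<le> cmod (z0 - z)" by (rule abs_Im_le_cmod)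
      then have "Im z0 / 2 \<le> Im z" using d by (simp add: r_def)
      moreover have "cmod z \<le> cmod z0 + cmod (z0 - z)" by (metis norm_triangle_sub add.commute norm_minus_commute)
      ultimately show ?thesis using d by simp
    qed
    have KU: "cball z0 r \<subseteq> upper_half"
    proof
      fix z assume "z \<in> cball z0 r"
      then have "Im z0 / 2 \<le> Im z" using inK by blast
      then show "z \<in> upper_half" using z0 by (simp add: upper_half_def)
    qed
    have bnd: "norm (cmod (bfac (g n) z - 1)) \<le> C * (g n / (g n + 1)\<^sup>2)" if "z \<in> cball z0 r" for n z
    proof -
      have iz: "0 < Im z" using KU that by (auto simp: upper_half_def)
      have "cmod (bfac (g n) z - 1) \<le> 8 * (1 / Im z + cmod z) * (g n / (g n + 1)\<^sup>2)"
        by (rule bfac_diff[OF gpos iz])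
      also have "\<dots> \<le> C * (g n / (g n + 1)\<^sup>2)"
      proof (intro mult_right_mono)
        have i0: "0 < Im z0" using z0 by (simp add: upper_half_def)
        have "1 / Im z \<le> 1 / (Im z0 / 2)"
          using inK[OF that] i0 by (intro divide_left_mono) auto
        then have "1 / Im z \<le> 2 / Im z0" by simp
        then show "8 * (1 / Im z + cmod z) \<le> C" using inK[OF that] by (simp add: C_def)
        show "0 \<le> g n / (g n + 1)\<^sup>2" using gpos[of n] by simp
      qed
      finally show ?thesis by simp
    qed
    have "uniformly_convergent_on (cball z0 r) (\<lambda>N x. \<Sum>n<N. cmod (bfac (g n) x - 1))"
    proof (rule Weierstrass_m_test'[where M="\<lambda>n. C * (g n / (g n + 1)\<^sup>2)"])
      fix n x assume "x \<in> cball z0 r"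
      then show "norm (cmod (bfac (g n) x - 1)) \<le> C * (g n / (g n + 1)\<^sup>2)" by (rule bnd)
    next
      show "summable (\<lambda>n. C * (g n / (g n + 1)\<^sup>2))" by (rule summable_mult[OF sg])
    qed
    then have "uniformly_convergent_on (cball z0 r) (\<lambda>N x. \<Prod>n<N. bfac (g n) x)"
    proof (intro uniformly_convergent_on_prod')
      fix n show "continuous_on (cball z0 r) (bfac (g n))"
        by (rule holomorphic_on_imp_continuous_on[OF holomorphic_on_subset[OF bfac_hol[OF gpos[of n]] KU]])
    qed (rule compact_cball)
    then obtain l where l: "uniform_limit (cball z0 r) Pn l sequentially"
      unfolding uniformly_convergent_on_def Pn_def by blast
    have "P x = l x" if "x \<in> cball z0 r" for x
    proof -
      have "(\<lambda>n. Pn n x) \<longlonglongrightarrow> l x" by (rule tendsto_uniform_limitI[OF l that])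
      then show ?thesis unfolding P_def by (rule limI)
    qed
    then have "uniform_limit (cball z0 r) Pn P sequentially \<longleftrightarrow> uniform_limit (cball z0 r) Pn l sequentially"
      by (intro uniform_limit_cong') auto
    then have "uniform_limit (cball z0 r) Pn P sequentially"
      using l by simp
    then show ?thesis by (simp add: r_def)
  qed
  have ptw: "(\<lambda>n. Pn n z) \<longlonglongrightarrow> P z" if "z \<in> upper_half" for z
    using conv[OF that] that by (intro tendsto_uniform_limitI) (auto simp: upper_half_def)
  have hol: "P holomorphic_on upper_half"
  proof -
    have "P field_differentiable (at z0)" if z0: "z0 \<in> upper_half" for z0
    proof -
      define r where "r = Im z0 / 2"
      have r: "0 < r" using z0 by (simp add: r_def upper_half_def)
      have KU: "cball z0 r \<subseteq> upper_half"
      proof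
        fix z assume "z \<in> cball z0 r"
        then have d: "cmod (z0 - z) \<le> r" by (simp add: dist_norm)
        have "\<bar>Im (z0 - z)\<bar> \<le> cmod (z0 - z)" by (rule abs_Im_le_cmod)
        then show "z \<in> upper_half" using d z0 by (simp add: r_def upper_half_def)
      qed
      have hn: "Pn n holomorphic_on upper_half" for n
        unfolding Pn_def by (intro holomorphic_on_prod bfac_hol gpos)
      have "continuous_on (cball z0 r) P \<and> P holomorphic_on ball z0 r"
      proof (rule holomorphic_uniform_limit[OF _ conv[OF z0, folded r_def]])
        show "\<forall>\<^sub>F n in sequentially. continuous_on (cball z0 r) (Pn n) \<and> Pn n holomorphic_on ball z0 r"
        proof (intro always_eventually allI conjI)
          fix n
          show "continuous_on (cball z0 r) (Pn n)"
            by (rule holomorphic_on_imp_continuous_on[OF holomorphic_on_subset[OF hn KU]])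
          show "Pn n holomorphic_on ball z0 r"
            using holomorphic_on_subset[OF hn] KU ball_subset_cball by blast
        qed
      qed auto
      then show ?thesis
        using r by (intro holomorphic_on_imp_differentiable_at[of _ "ball z0 r"]) auto
    qed
    then show ?thesis
      using upper_half_open by (simp add: holomorphic_on_open field_differentiable_def)
  qed
  have bd: "cmod (P z) \<le> 1" if z: "z \<in> upper_half" for z
  proof -
    have iz: "0 < Im z" using z by (simp add: upper_half_def)
    have "cmod (Pn n z) \<le> 1" for n
    proof -
      have "cmod (Pn n z) = (\<Prod>k<n. cmod (bfac (g k) z))" by (simp add: Pn_def prod_norm)
      also have "\<dots> \<le> 1"
      proof (rule prod_le_1)
        fix k assume "k \<in> {..<n}"
        show "0 \<le> cmod (bfac (g k) z) \<and> cmod (bfac (g k) z) \<le> 1"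
          using bfac_le1[OF gpos iz] by simp
      qed
      finally show ?thesis .
    qed
    then have "\<exists>N. \<forall>n\<ge>N. cmod (Pn n z) \<le> 1" by blast
    then show ?thesis
      by (rule LIMSEQ_le_const2[OF tendsto_norm[OF ptw[OF z]]])
  qed
  have zero: "P (Complex 0 (g m)) = 0" for m
  proof -
    have zU: "Complex 0 (g m) \<in> upper_half" using gpos[of m] by (simp add: upper_half_def)
    have "Pn n (Complex 0 (g m)) = 0" if "n \<ge> Suc m" for n
    proof -
      have "m \<in> {..<n}" using that by simp
      moreover have "bfac (g m) (Complex 0 (g m)) = 0" by (rule bfac_zero)
      ultimately have "\<exists>k\<in>{..<n}. bfac (g k) (Complex 0 (g m)) = 0" by blast
      then show ?thesis unfolding Pn_def by (intro prod_zero) simp_all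
    qed
    then have "eventually (\<lambda>n. Pn n (Complex 0 (g m)) = 0) sequentially"
      unfolding eventually_sequentially by blast
    then have A: "(\<lambda>n. Pn n (Complex 0 (g m))) \<longlonglongrightarrow> 0" by (rule tendsto_eventually)
    show ?thesis using LIMSEQ_unique[OF ptw[OF zU] A] .
  qed
  have nonzero: "P (Complex 1 1) \<noteq> 0"
  proof -
    define z1 where "z1 = Complex 1 1"
    have z1U: "z1 \<in> upper_half" by (simp add: z1_def upper_half_def)
    have iz1: "0 < Im z1" by (simp add: z1_def)
    have "summable (\<lambda>k. norm (bfac (g k) z1 - 1))"
    proof (rule summable_comparison_test)
      show "summable (\<lambda>k. (8 * (1 / Im z1 + cmod z1)) * (g k / (g k + 1)\<^sup>2))"
        by (rule summable_mult[OF sg])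
      have "\<forall>n\<ge>0. norm (norm (bfac (g n) z1 - 1)) \<le> 8 * (1 / Im z1 + cmod z1) * (g n / (g n + 1)\<^sup>2)"
        using bfac_diff[OF gpos iz1] by simp
      then show "\<exists>N. \<forall>n\<ge>N. norm (norm (bfac (g n) z1 - 1)) \<le> 8 * (1 / Im z1 + cmod z1) * (g n / (g n + 1)\<^sup>2)"
        by blast
    qed
    moreover have "bfac (g k) z1 - 1 \<noteq> -1" for k
    proof -
      have "bfac (g k) z1 \<noteq> 0" by (rule bfac_nonzero) (simp add: z1_def)
      then show ?thesis by simp
    qed
    ultimately have cp: "convergent_prod (\<lambda>k. 1 + (bfac (g k) z1 - 1))"
      by (rule summable_imp_convergent_prod_complex)
    then have cp': "convergent_prod (\<lambda>k. bfac (g k) z1)" by simp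
    have A: "(\<lambda>n. \<Prod>i\<le>n. bfac (g i) z1) \<longlonglongrightarrow> prodinf (\<lambda>k. bfac (g k) z1)"
      by (rule convergent_prod_LIMSEQ[OF cp'])
    have e: "(\<lambda>n. \<Prod>i\<le>n. bfac (g i) z1) = (\<lambda>n. Pn (Suc n) z1)"
      by (rule ext) (simp add: Pn_def lessThan_Suc_atMost)
    have B: "(\<lambda>n. Pn (Suc n) z1) \<longlonglongrightarrow> P z1"
      using ptw[OF z1U] by (rule LIMSEQ_Suc)
    have "P z1 = prodinf (\<lambda>k. bfac (g k) z1)"
      using LIMSEQ_unique[OF B A[unfolded e]] .
    moreover have "prodinf (\<lambda>k. bfac (g k) z1) \<noteq> 0"
    proof (rule prodinf_nonzero[OF cp'])
      fix i show "bfac (g i) z1 \<noteq> 0" by (rule bfac_nonzero) (simp add: z1_def)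
    qed
    ultimately show ?thesis by (simp add: z1_def)
  qed
  show ?thesis using hol bd nonzero zero by (intro exI[of _ P]) simp
qed

lemma B_main:
  assumes N: "N \<subseteq> {0<..}" "countable N" "(\<lambda>l. l / (l + 1)\<^sup>2) summable_on N"
  shows "\<exists>f\<in>H2. H2_nonzero f \<and> (\<forall>l\<in>N. f (Complex 0 l) = 0)"
proof -
  have "\<exists>P. P holomorphic_on upper_half \<and> (\<forall>z\<in>upper_half. cmod (P z) \<le> 1) \<and>
            P (Complex 1 1) \<noteq> 0 \<and> (\<forall>l\<in>N. P (Complex 0 l) = 0)"
  proof (cases "finite N")
    case True
    define P where "P z = (\<Prod>l\<in>N. bfac l z)" for z
    have hol: "P holomorphic_on upper_half"
      unfolding P_def
    proof (rule holomorphic_on_prod)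
      fix l assume "l \<in> N" then have "0 < l" using N(1) by auto
      then show "bfac l holomorphic_on upper_half" by (rule bfac_hol)
    qed
    have bd: "cmod (P z) \<le> 1" if z: "z \<in> upper_half" for z
    proof -
      have iz: "0 < Im z" using z by (simp add: upper_half_def)
      have "cmod (P z) = (\<Prod>l\<in>N. cmod (bfac l z))" by (simp add: P_def prod_norm)
      also have "\<dots> \<le> 1"
      proof (rule prod_le_1)
        fix l assume "l \<in> N" then have "0 < l" using N(1) by auto
        then show "0 \<le> cmod (bfac l z) \<and> cmod (bfac l z) \<le> 1"
          using bfac_le1[OF _ iz] by simp
      qed
      finally show ?thesis .
    qed
    have nz: "P (Complex 1 1) \<noteq> 0"
    proof -
      have "\<forall>l\<in>N. bfac l (Complex 1 1) \<noteq> 0" by (simp add: bfac_nonzero)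
      then show ?thesis unfolding P_def using True by simp
    qed
    have zero: "P (Complex 0 l) = 0" if "l \<in> N" for l
    proof -
      have "\<exists>k\<in>N. bfac k (Complex 0 l) = 0" using that bfac_zero[of l] by blast
      then show ?thesis unfolding P_def using True by (intro prod_zero) simp_all
    qed
    show ?thesis using hol bd nz zero by (intro exI[of _ P]) simp
  next
    case False
    define g where "g = from_nat_into N"
    have bij: "bij_betw g UNIV N" unfolding g_def by (rule bij_betw_from_nat_into[OF N(2) False])
    have ne: "N \<noteq> {}" using False by auto
    have gN: "g n \<in> N" for n unfolding g_def by (rule from_nat_into[OF ne])
    have gpos: "0 < g n" for n using gN[of n] N(1) by auto
    have "(\<lambda>n. g n / (g n + 1)\<^sup>2) summable_on UNIV"
      using summable_on_reindex_bij_betw[OF bij, of "\<lambda>l. l / (l + 1)\<^sup>2"] N(3) by simp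
    then have sg: "summable (\<lambda>n. g n / (g n + 1)\<^sup>2)"
      using summable_on_UNIV_nonneg_real_iff[of "\<lambda>n. g n / (g n + 1)\<^sup>2"] gpos
      by (simp add: less_imp_le)
    obtain P where P: "P holomorphic_on upper_half" "\<forall>z\<in>upper_half. cmod (P z) \<le> 1"
      "P (Complex 1 1) \<noteq> 0" "\<forall>n. P (Complex 0 (g n)) = 0"
      using B_inf[OF gpos sg] by blast
    have "\<forall>l\<in>N. P (Complex 0 l) = 0"
    proof
      fix l assume "l \<in> N"
      then obtain n where "l = g n" using bij_betw_imp_surj_on[OF bij] by blast
      then show "P (Complex 0 l) = 0" using P(4) by simp
    qed
    then show ?thesis using P(1-3) by (intro exI[of _ P]) simp
  qed
  then obtain P where P: "P holomorphic_on upper_half" "\<forall>z\<in>upper_half. cmod (P z) \<le> 1"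
      "P (Complex 1 1) \<noteq> 0" "\<forall>l\<in>N. P (Complex 0 l) = 0" by blast
  define f where "f z = P z / (z + \<i>)" for z
  have fH: "f \<in> H2" unfolding f_def by (rule H2_of_bounded) (use P in auto)
  have "Complex 1 1 + \<i> \<noteq> 0" by (simp add: complex_eq_iff)
  then have "f (Complex 1 1) \<noteq> 0" using P(3) by (simp add: f_def)
  then have "H2_nonzero f" unfolding H2_nonzero_def
    by (intro bexI[of _ "Complex 1 1"]) (auto simp: upper_half_def)
  moreover have "\<forall>l\<in>N. f (Complex 0 l) = 0" using P(4) by (simp add: f_def)
  ultimately show ?thesis using fH by blast
qed

lemma seg_bound:
  assumes cont: "continuous_on (closed_segment a b) F"
  shows "ennreal (cmod (contour_integral (linepath a b) F))
         \<le> (\<integral>\<^sup>+s. ennreal (indicator {0..1} s * (cmod (F (linepath a b s)) * cmod (b - a))) \<partial>lborel)"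
proof -
  have ci: "F contour_integrable_on linepath a b" by (rule contour_integrable_continuous_linepath[OF cont])
  then have hi: "((\<lambda>x. F (linepath a b x) * (b - a)) has_integral contour_integral (linepath a b) F) {0..1}"
    using has_contour_integral_integral has_contour_integral_linepath by blast
  define \<phi> where "\<phi> s = cmod (F (linepath a b s)) * cmod (b - a)" for s
  have c1: "continuous_on {0..1} (F \<circ> linepath a b)"
    by (rule continuous_on_compose[OF continuous_on_linepath]) (simp add: linepath_image_01 cont)
  have c\<phi>: "continuous_on {0..1} \<phi>"
    unfolding \<phi>_def using c1 by (intro continuous_intros) (auto simp: o_def)
  have "cmod (contour_integral (linepath a b) F) = cmod (integral {0..1} (\<lambda>x. F (linepath a b x) * (b - a)))"
    using integral_unique[OF hi] by simp
  also have "\<dots> \<le> integral {0..1} \<phi>"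
  proof (rule integral_norm_bound_integral)
    show "(\<lambda>x. F (linepath a b x) * (b - a)) integrable_on {0..1}" using hi by blast
    show "\<phi> integrable_on {0..1}" using c\<phi> by (rule integrable_continuous_interval)
    fix x show "cmod (F (linepath a b x) * (b - a)) \<le> \<phi> x" by (simp add: \<phi>_def norm_mult)
  qed
  finally have le: "cmod (contour_integral (linepath a b) F) \<le> integral {0..1} \<phi>" .
  have "(\<phi> has_integral integral {0..1} \<phi>) {0..1}"
    using integrable_continuous_interval[OF c\<phi>] by (rule integrable_integral)
  then have "(\<integral>\<^sup>+x. ennreal (indicator {0..1} x * \<phi> x) \<partial>lborel) = ennreal (integral {0..1} \<phi>)"
  proof (rule nn_integral_has_integral_lebesgue[rotated])
    fix x show "0 \<le> \<phi> x" by (simp add: \<phi>_def)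
  qed
  then show ?thesis using le unfolding \<phi>_def by (simp add: ennreal_leI)
qed

lemma affine_sub:
  fixes G :: "real \<Rightarrow> real"
  assumes x12: "x1 < x2" and cont: "continuous_on {x1..x2} G"
  shows "(\<integral>\<^sup>+s. ennreal (indicator {0..1} s * (G (x1 + s * (x2 - x1)) * (x2 - x1))) \<partial>lborel)
       = (\<integral>\<^sup>+x. ennreal (indicator {x1..x2} x * G x) \<partial>lborel)"
proof -
  define c where "c = x2 - x1"
  have c: "0 < c" using x12 by (simp add: c_def)
  have m0: "(\<lambda>x. indicator {x1..x2} x *\<^sub>R G x) \<in> borel_measurable borel"
    by (rule borel_measurable_continuous_on_indicator[OF _ cont]) simp
  define H where "H x = ennreal (indicator {x1..x2} x * G x)" for x
  have mH: "H \<in> borel_measurable borel" unfolding H_def using m0 by simp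
  have mA: "(\<lambda>s. x1 + c * s) \<in> borel_measurable borel"
    by (intro borel_measurable_continuous_onI continuous_intros)
  have mHA: "(\<lambda>s. H (x1 + c * s)) \<in> borel_measurable borel"
    using measurable_compose[OF mA mH] by (simp add: o_def)
  have "(\<integral>\<^sup>+x. H x \<partial>lborel) = ennreal c * (\<integral>\<^sup>+s. H (x1 + c * s) \<partial>lborel)"
    using nn_integral_real_affine[OF mH, of c x1] c by simp
  also have "\<dots> = (\<integral>\<^sup>+s. ennreal c * H (x1 + c * s) \<partial>lborel)"
  proof -
    have mHA': "(\<lambda>s. H (x1 + c * s)) \<in> borel_measurable lborel" using mHA by simp
    show ?thesis using nn_integral_cmult[OF mHA', of "ennreal c"] by simp
  qed
  also have "\<dots> = (\<integral>\<^sup>+s. ennreal (indicator {0..1} s * (G (x1 + s * (x2 - x1)) * (x2 - x1))) \<partial>lborel)"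
  proof (rule nn_integral_cong)
    fix s :: real
    have "indicator {x1..x2} (x1 + c * s) = (indicator {0..1} s :: real)"
    proof -
      have e1: "x1 \<le> x1 + c * s \<longleftrightarrow> 0 \<le> s" using c by (simp add: zero_le_mult_iff)
      have "x1 + c * s \<le> x2 \<longleftrightarrow> c * s \<le> c * 1" by (simp add: c_def algebra_simps)
      also have "\<dots> \<longleftrightarrow> s \<le> 1" using mult_le_cancel_left_pos[OF c] by blast
      finally have e2: "x1 + c * s \<le> x2 \<longleftrightarrow> s \<le> 1" .
      show ?thesis using e1 e2 by (simp add: indicator_def)
    qed
    then show "ennreal c * H (x1 + c * s) = ennreal (indicator {0..1} s * (G (x1 + s * (x2 - x1)) * (x2 - x1)))"
      using c unfolding H_def by (simp add: ennreal_mult'[symmetric] c_def mult.commute mult.left_commute)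
  qed
  finally show ?thesis unfolding H_def by simp
qed

lemma factor_zeros:
  assumes hol: "f holomorphic_on S" and op: "open S" and fin: "finite L"
      and LS: "\<forall>l\<in>L. Complex 0 l \<in> S \<and> f (Complex 0 l) = 0"
  shows "\<exists>g. g holomorphic_on S \<and> (\<forall>z. f z = (\<Prod>l\<in>L. (z - Complex 0 l)) * g z)"
  using fin LS
proof (induction L)
  case empty
  then show ?case using hol by (intro exI[of _ f]) simp
next
  case (insert b L)
  then obtain g where g: "g holomorphic_on S" "\<forall>z. f z = (\<Prod>l\<in>L. (z - Complex 0 l)) * g z" by auto
  have bS: "Complex 0 b \<in> S" and fb: "f (Complex 0 b) = 0" using insert.prems by auto
  have nz: "\<forall>l\<in>L. Complex 0 b - Complex 0 l \<noteq> 0" using insert.hyps(2) by (auto simp: complex_eq_iff)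
  have "(\<Prod>l\<in>L. (Complex 0 b - Complex 0 l)) \<noteq> 0"
    using nz insert.hyps(1) by (subst prod_zero_iff) auto
  then have gb: "g (Complex 0 b) = 0" using g(2) fb by (metis mult_eq_0_iff)
  define g' where "g' z = (if z = Complex 0 b then deriv g (Complex 0 b) else (g z - g (Complex 0 b)) / (z - Complex 0 b))" for z
  have hol': "g' holomorphic_on S" unfolding g'_def by (rule pole_lemma_open[OF g(1) op])
  have "g z = (z - Complex 0 b) * g' z" for z
    using gb by (auto simp: g'_def)
  then have "\<forall>z. f z = (\<Prod>l\<in>insert b L. (z - Complex 0 l)) * g' z"
    using g(2) insert.hyps by (simp add: mult.assoc mult.left_commute)
  then show ?case using hol' by blast
qed

lemma exists_small_right:
  fixes G :: "real \<Rightarrow> ennreal"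
  assumes fin: "(\<integral>\<^sup>+x. G x \<partial>lborel) < \<infinity>"
  shows "\<exists>x\<ge>X0. G x \<le> 1"
proof (rule ccontr)
  assume "\<not> ?thesis"
  then have big: "1 < G x" if "x \<ge> X0" for x using that not_less by blast
  obtain r where r: "(\<integral>\<^sup>+x. G x \<partial>lborel) = ennreal r" "0 \<le> r"
    using fin by (cases "(\<integral>\<^sup>+x. G x \<partial>lborel)") auto
  have "ennreal (real n) \<le> (\<integral>\<^sup>+x. G x \<partial>lborel)" for n :: nat
  proof -
    have "ennreal (real n) = emeasure lborel {X0..X0 + real n}"
      by (simp add: emeasure_lborel_Icc_eq)
    also have "\<dots> = (\<integral>\<^sup>+x. indicator {X0..X0 + real n} x \<partial>lborel)" by simp
    also have "\<dots> \<le> (\<integral>\<^sup>+x. G x \<partial>lborel)"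
    proof (rule nn_integral_mono)
      fix x show "indicator {X0..X0 + real n} x \<le> G x"
        using big[of x] by (auto simp: indicator_def less_imp_le)
    qed
    finally show ?thesis .
  qed
  then have "ennreal (real (nat \<lceil>r\<rceil> + 1)) \<le> ennreal r" using r(1) by metis
  then have "real (nat \<lceil>r\<rceil> + 1) \<le> r" using r(2) by (simp only: ennreal_le_iff)
  then show False by linarith
qed

lemma exists_small_left:
  fixes G :: "real \<Rightarrow> ennreal"
  assumes fin: "(\<integral>\<^sup>+x. G x \<partial>lborel) < \<infinity>"
  shows "\<exists>x\<le>X0. G x \<le> 1"
proof (rule ccontr)
  assume "\<not> ?thesis"
  then have big: "1 < G x" if "x \<le> X0" for x using that not_less by blast
  obtain r where r: "(\<integral>\<^sup>+x. G x \<partial>lborel) = ennreal r" "0 \<le> r"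
    using fin by (cases "(\<integral>\<^sup>+x. G x \<partial>lborel)") auto
  have "ennreal (real n) \<le> (\<integral>\<^sup>+x. G x \<partial>lborel)" for n :: nat
  proof -
    have "ennreal (real n) = emeasure lborel {X0 - real n..X0}"
      by (simp add: emeasure_lborel_Icc_eq)
    also have "\<dots> = (\<integral>\<^sup>+x. indicator {X0 - real n..X0} x \<partial>lborel)" by simp
    also have "\<dots> \<le> (\<integral>\<^sup>+x. G x \<partial>lborel)"
    proof (rule nn_integral_mono)
      fix x show "indicator {X0 - real n..X0} x \<le> G x"
        using big[of x] by (auto simp: indicator_def less_imp_le)
    qed
    finally show ?thesis .
  qed
  then have "ennreal (real (nat \<lceil>r\<rceil> + 1)) \<le> ennreal r" using r(1) by metis
  then have "real (nat \<lceil>r\<rceil> + 1) \<le> r" using r(2) by (simp only: ennreal_le_iff)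
  then show False by linarith
qed

definition Jc :: real where "Jc = enn2real (\<integral>\<^sup>+x. ennreal (inverse (1 + (x::real)\<^sup>2)) \<partial>lborel)"

lemma Jc_eq: "(\<integral>\<^sup>+x. ennreal (inverse (1 + (x::real)\<^sup>2)) \<partial>lborel) = ennreal Jc"
  using inv_1_sq_finite unfolding Jc_def by (simp add: less_top[symmetric])

lemma int_inv_sq:
  assumes c: "0 < (c::real)"
  shows "(\<integral>\<^sup>+x. ennreal (1 / (x\<^sup>2 + c\<^sup>2)) \<partial>lborel) = ennreal (Jc / c)"
proof -
  have m: "(\<lambda>x::real. ennreal (1 / (x\<^sup>2 + c\<^sup>2))) \<in> borel_measurable borel" by measurable
  have "(\<integral>\<^sup>+x. ennreal (1 / (x\<^sup>2 + c\<^sup>2)) \<partial>lborel)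
      = ennreal \<bar>c\<bar> * (\<integral>\<^sup>+u. ennreal (1 / ((0 + c * u)\<^sup>2 + c\<^sup>2)) \<partial>lborel)"
    by (rule nn_integral_real_affine[OF m]) (use c in simp)
  also have "(\<lambda>u. ennreal (1 / ((0 + c * u)\<^sup>2 + c\<^sup>2))) = (\<lambda>u. ennreal (1 / c\<^sup>2) * ennreal (inverse (1 + u\<^sup>2)))"
  proof (rule ext)
    fix u :: real
    have p: "0 < 1 + u\<^sup>2" by (simp add: add_pos_nonneg)
    have "1 / ((0 + c * u)\<^sup>2 + c\<^sup>2) = (1 / c\<^sup>2) * inverse (1 + u\<^sup>2)"
      using c p by (simp add: field_simps power_mult_distrib)
    then show "ennreal (1 / ((0 + c * u)\<^sup>2 + c\<^sup>2)) = ennreal (1 / c\<^sup>2) * ennreal (inverse (1 + u\<^sup>2))"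
      using p by (simp add: ennreal_mult[symmetric])
  qed
  also have "(\<integral>\<^sup>+u. ennreal (1 / c\<^sup>2) * ennreal (inverse (1 + u\<^sup>2)) \<partial>lborel)
       = ennreal (1 / c\<^sup>2) * ennreal Jc"
    by (subst nn_integral_cmult) (auto simp: Jc_eq)
  also have "ennreal \<bar>c\<bar> * (ennreal (1 / c\<^sup>2) * ennreal Jc) = ennreal (Jc / c)"
  proof -
    have J0: "0 \<le> Jc" by (simp add: Jc_def)
    have "\<bar>c\<bar> * (1 / c\<^sup>2 * Jc) = Jc / c" using c by (simp add: field_simps power2_eq_square)
    then show ?thesis using c J0 by (simp add: ennreal_mult[symmetric])
  qed
  finally show ?thesis .
qed

lemma hseg:
  assumes x12: "x1 < x2" and cont: "continuous_on (closed_segment (Complex x1 y) (Complex x2 y)) F"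
  shows "ennreal (cmod (contour_integral (linepath (Complex x1 y) (Complex x2 y)) F))
         \<le> (\<integral>\<^sup>+x. ennreal (indicator {x1..x2} x * cmod (F (Complex x y))) \<partial>lborel)"
proof -
  have e: "linepath (Complex x1 y) (Complex x2 y) s = Complex (x1 + s * (x2 - x1)) y" for s
    by (simp add: linepath_def complex_eq_iff algebra_simps)
  have eq: "Complex x2 y - Complex x1 y = complex_of_real (x2 - x1)" by (simp add: complex_eq_iff)
  have n: "cmod (Complex x2 y - Complex x1 y) = x2 - x1" unfolding eq norm_of_real using x12 by simp
  have img: "(\<lambda>x. Complex x y) ` {x1..x2} \<subseteq> closed_segment (Complex x1 y) (Complex x2 y)"
    using x12 by (auto simp: closed_segment_same_Im closed_segment_eq_real_ivl)
  have cC: "continuous_on {x1..x2} (\<lambda>x. Complex x y)"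
    unfolding Complex_eq by (intro continuous_intros)
  have cG: "continuous_on {x1..x2} (\<lambda>x. cmod (F (Complex x y)))"
    by (intro continuous_intros continuous_on_compose2[OF cont cC img])
  have "ennreal (cmod (contour_integral (linepath (Complex x1 y) (Complex x2 y)) F))
         \<le> (\<integral>\<^sup>+s. ennreal (indicator {0..1} s * (cmod (F (Complex (x1 + s * (x2 - x1)) y)) * (x2 - x1))) \<partial>lborel)"
    using seg_bound[OF cont] unfolding e n .
  also have "\<dots> = (\<integral>\<^sup>+x. ennreal (indicator {x1..x2} x * cmod (F (Complex x y))) \<partial>lborel)"
    by (rule affine_sub[OF x12 cG])
  finally show ?thesis .
qed

lemma vseg:
  assumes y12: "y1 < y2" and cont: "continuous_on (closed_segment (Complex x y1) (Complex x y2)) F"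
  shows "ennreal (cmod (contour_integral (linepath (Complex x y1) (Complex x y2)) F))
         \<le> (\<integral>\<^sup>+y. ennreal (indicator {y1..y2} y * cmod (F (Complex x y))) \<partial>lborel)"
proof -
  have e: "linepath (Complex x y1) (Complex x y2) s = Complex x (y1 + s * (y2 - y1))" for s
    by (simp add: linepath_def complex_eq_iff algebra_simps)
  have eq: "Complex x y2 - Complex x y1 = \<i> * complex_of_real (y2 - y1)" by (simp add: complex_eq_iff)
  have n: "cmod (Complex x y2 - Complex x y1) = y2 - y1" unfolding eq norm_mult norm_of_real using y12 by simp
  have img: "(\<lambda>y. Complex x y) ` {y1..y2} \<subseteq> closed_segment (Complex x y1) (Complex x y2)"
    using y12 by (auto simp: closed_segment_same_Re closed_segment_eq_real_ivl)
  have cC: "continuous_on {y1..y2} (\<lambda>y. Complex x y)"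
    unfolding Complex_eq by (intro continuous_intros)
  have cG: "continuous_on {y1..y2} (\<lambda>y. cmod (F (Complex x y)))"
    by (intro continuous_intros continuous_on_compose2[OF cont cC img])
  have "ennreal (cmod (contour_integral (linepath (Complex x y1) (Complex x y2)) F))
         \<le> (\<integral>\<^sup>+s. ennreal (indicator {0..1} s * (cmod (F (Complex x (y1 + s * (y2 - y1)))) * (y2 - y1))) \<partial>lborel)"
    using seg_bound[OF cont] unfolding e n .
  also have "\<dots> = (\<integral>\<^sup>+y. ennreal (indicator {y1..y2} y * cmod (F (Complex x y))) \<partial>lborel)"
    by (rule affine_sub[OF y12 cG])
  finally show ?thesis .
qed

lemma ci_rev:
  "cmod (contour_integral (linepath b a) F) = cmod (contour_integral (linepath a b) F)"
proof -
  have "contour_integral (reversepath (linepath a b)) F = - contour_integral (linepath a b) F"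
    by (rule contour_integral_reversepath) simp
  then show ?thesis by simp
qed

lemma rect_ineq:
  assumes hol: "h holomorphic_on upper_half"
    and d: "0 < \<delta>" "\<delta> < t" "t < Y" and X: "0 < X1" "0 < X2"
  defines "F \<equiv> (\<lambda>w. h w / (w - Complex 0 t))"
  shows "ennreal (2 * pi * cmod (h (Complex 0 t))) \<le>
     (\<integral>\<^sup>+x. ennreal (indicator {-X2..X1} x * cmod (F (Complex x \<delta>))) \<partial>lborel)
   + (\<integral>\<^sup>+y. ennreal (indicator {\<delta>..Y} y * cmod (F (Complex X1 y))) \<partial>lborel)
   + (\<integral>\<^sup>+x. ennreal (indicator {-X2..X1} x * cmod (F (Complex x Y))) \<partial>lborel)
   + (\<integral>\<^sup>+y. ennreal (indicator {\<delta>..Y} y * cmod (F (Complex (-X2) y))) \<partial>lborel)"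
proof -
  define z0 where "z0 = Complex 0 t"
  define a1 where "a1 = Complex (-X2) \<delta>"
  define a2 where "a2 = Complex X1 \<delta>"
  define a3 where "a3 = Complex X1 Y"
  define a4 where "a4 = Complex (-X2) Y"
  have zbox: "z0 \<in> box a1 a3" using d X by (simp add: in_box_complex_iff z0_def a1_def a3_def)
  have pimg: "path_image (rectpath a1 a3) \<subseteq> upper_half - {z0}"
  proof -
    have "path_image (rectpath a1 a3) = cbox a1 a3 - box a1 a3"
      by (rule path_image_rectpath_cbox_minus_box) (use d X in \<open>simp_all add: a1_def a3_def\<close>)
    moreover have "cbox a1 a3 \<subseteq> upper_half"
      using d by (auto simp: in_cbox_complex_iff upper_half_def a1_def a3_def)
    ultimately show ?thesis using zbox by auto
  qed
  have "((\<lambda>w. h w / (w - z0)) has_contour_integral (2 * pi * \<i> * winding_number (rectpath a1 a3) z0 * h z0)) (rectpath a1 a3)"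
  proof (rule Cauchy_integral_formula_convex_simple[OF upper_half_convex hol])
    show "z0 \<in> interior upper_half" using upper_half_open d by (simp add: interior_open z0_def upper_half_def)
  qed (use pimg in auto)
  then have ci: "contour_integral (rectpath a1 a3) F = 2 * pi * \<i> * h z0"
    using winding_number_rectpath[OF zbox] contour_integral_unique by (simp add: F_def z0_def)
  have contF: "continuous_on (upper_half - {z0}) F"
    unfolding F_def z0_def
    by (intro continuous_intros holomorphic_on_imp_continuous_on holomorphic_on_subset[OF hol]) auto
  have s1: "closed_segment a1 a2 \<subseteq> upper_half - {z0}"
    using d X by (auto simp: closed_segment_same_Im closed_segment_eq_real_ivl a1_def a2_def upper_half_def z0_def)
  have s2: "closed_segment a2 a3 \<subseteq> upper_half - {z0}"
    using d X by (auto simp: closed_segment_same_Re closed_segment_eq_real_ivl a2_def a3_def upper_half_def z0_def)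
  have s3: "closed_segment a4 a3 \<subseteq> upper_half - {z0}"
    using d X by (auto simp: closed_segment_same_Im closed_segment_eq_real_ivl a4_def a3_def upper_half_def z0_def)
  have s4: "closed_segment a1 a4 \<subseteq> upper_half - {z0}"
    using d X by (auto simp: closed_segment_same_Re closed_segment_eq_real_ivl a1_def a4_def upper_half_def z0_def)
  have c1: "continuous_on (closed_segment a1 a2) F" by (rule continuous_on_subset[OF contF s1])
  have c2: "continuous_on (closed_segment a2 a3) F" by (rule continuous_on_subset[OF contF s2])
  have c3: "continuous_on (closed_segment a4 a3) F" by (rule continuous_on_subset[OF contF s3])
  have c4: "continuous_on (closed_segment a1 a4) F" by (rule continuous_on_subset[OF contF s4])
  have c3': "continuous_on (closed_segment a3 a4) F" using c3 by (simp add: closed_segment_commute)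
  have c4': "continuous_on (closed_segment a4 a1) F" using c4 by (simp add: closed_segment_commute)
  have i1: "F contour_integrable_on linepath a1 a2" by (rule contour_integrable_continuous_linepath[OF c1])
  have i2: "F contour_integrable_on linepath a2 a3" by (rule contour_integrable_continuous_linepath[OF c2])
  have i3: "F contour_integrable_on linepath a3 a4" by (rule contour_integrable_continuous_linepath[OF c3'])
  have i4: "F contour_integrable_on linepath a4 a1" by (rule contour_integrable_continuous_linepath[OF c4'])
  have i34: "F contour_integrable_on (linepath a3 a4 +++ linepath a4 a1)"
    by (rule contour_integrable_joinI[OF i3 i4]) simp_all
  have i234: "F contour_integrable_on (linepath a2 a3 +++ linepath a3 a4 +++ linepath a4 a1)"
    by (rule contour_integrable_joinI[OF i2 i34]) simp_all
  have ra: "Complex (Re a3) (Im a1) = a2" "Complex (Re a1) (Im a3) = a4"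
    by (simp_all add: a1_def a2_def a3_def a4_def)
  have dec: "contour_integral (rectpath a1 a3) F =
        contour_integral (linepath a1 a2) F + (contour_integral (linepath a2 a3) F +
        (contour_integral (linepath a3 a4) F + contour_integral (linepath a4 a1) F))"
    unfolding rectpath_def Let_def ra
    using i1 i2 i3 i4 i34 i234 by simp
  have "2 * pi * cmod (h z0) \<le> cmod (contour_integral (linepath a1 a2) F) + cmod (contour_integral (linepath a2 a3) F)
        + cmod (contour_integral (linepath a3 a4) F) + cmod (contour_integral (linepath a4 a1) F)"
  proof -
    let ?A = "contour_integral (linepath a1 a2) F" and ?B = "contour_integral (linepath a2 a3) F"
      and ?C = "contour_integral (linepath a3 a4) F" and ?D = "contour_integral (linepath a4 a1) F"
    have "2 * pi * cmod (h z0) = cmod (2 * pi * \<i> * h z0)" by (simp add: norm_mult)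
    also have "\<dots> = cmod (?A + (?B + (?C + ?D)))" using ci dec by simp
    also have "\<dots> \<le> cmod ?A + cmod (?B + (?C + ?D))" by (rule norm_triangle_ineq)
    also have "cmod (?B + (?C + ?D)) \<le> cmod ?B + cmod (?C + ?D)" by (rule norm_triangle_ineq)
    also have "cmod (?C + ?D) \<le> cmod ?C + cmod ?D" by (rule norm_triangle_ineq)
    finally show ?thesis by simp
  qed
  then have "ennreal (2 * pi * cmod (h z0)) \<le> ennreal (cmod (contour_integral (linepath a1 a2) F)) + ennreal (cmod (contour_integral (linepath a2 a3) F))
        + ennreal (cmod (contour_integral (linepath a4 a3) F)) + ennreal (cmod (contour_integral (linepath a1 a4) F))"
    by (simp add: ci_rev ennreal_plus[symmetric] ennreal_leI del: ennreal_plus)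
  also have "\<dots> \<le> (\<integral>\<^sup>+x. ennreal (indicator {-X2..X1} x * cmod (F (Complex x \<delta>))) \<partial>lborel)
   + (\<integral>\<^sup>+y. ennreal (indicator {\<delta>..Y} y * cmod (F (Complex X1 y))) \<partial>lborel)
   + (\<integral>\<^sup>+x. ennreal (indicator {-X2..X1} x * cmod (F (Complex x Y))) \<partial>lborel)
   + (\<integral>\<^sup>+y. ennreal (indicator {\<delta>..Y} y * cmod (F (Complex (-X2) y))) \<partial>lborel)"
  proof (intro add_mono)
    show "ennreal (cmod (contour_integral (linepath a1 a2) F)) \<le> (\<integral>\<^sup>+x. ennreal (indicator {-X2..X1} x * cmod (F (Complex x \<delta>))) \<partial>lborel)"
      using hseg[of "-X2" X1 \<delta> F] c1 X by (simp add: a1_def a2_def)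
    show "ennreal (cmod (contour_integral (linepath a2 a3) F)) \<le> (\<integral>\<^sup>+y. ennreal (indicator {\<delta>..Y} y * cmod (F (Complex X1 y))) \<partial>lborel)"
      using vseg[of \<delta> Y X1 F] c2 d by (simp add: a2_def a3_def)
    show "ennreal (cmod (contour_integral (linepath a4 a3) F)) \<le> (\<integral>\<^sup>+x. ennreal (indicator {-X2..X1} x * cmod (F (Complex x Y))) \<partial>lborel)"
      using hseg[of "-X2" X1 Y F] c3 X by (simp add: a4_def a3_def)
    show "ennreal (cmod (contour_integral (linepath a1 a4) F)) \<le> (\<integral>\<^sup>+y. ennreal (indicator {\<delta>..Y} y * cmod (F (Complex (-X2) y))) \<partial>lborel)"
      using vseg[of \<delta> Y "-X2" F] c4 d by (simp add: a1_def a4_def)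
  qed
  finally show ?thesis by (simp add: z0_def)
qed

lemma int_bound:
  fixes \<phi> A B :: "real \<Rightarrow> real"
  assumes le: "\<And>x. x \<in> S \<Longrightarrow> \<phi> x \<le> a * A x + b * B x"
    and A0: "\<And>x. 0 \<le> A x" and B0: "\<And>x. 0 \<le> B x" and a: "0 \<le> a" and b: "0 \<le> b"
    and mA: "A \<in> borel_measurable borel" and mB: "B \<in> borel_measurable borel"
    and IA: "(\<integral>\<^sup>+x. ennreal (A x) \<partial>lborel) \<le> ennreal IA"
    and IB: "(\<integral>\<^sup>+x. ennreal (B x) \<partial>lborel) \<le> ennreal IB"
    and IA0: "0 \<le> IA" and IB0: "0 \<le> IB"
  shows "(\<integral>\<^sup>+x. ennreal (indicator S x * \<phi> x) \<partial>lborel) \<le> ennreal (a * IA + b * IB)"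
proof -
  have mA': "(\<lambda>x. ennreal (A x)) \<in> borel_measurable lborel" using mA by simp
  have mB': "(\<lambda>x. ennreal (B x)) \<in> borel_measurable lborel" using mB by simp
  have "(\<integral>\<^sup>+x. ennreal (indicator S x * \<phi> x) \<partial>lborel)
        \<le> (\<integral>\<^sup>+x. (ennreal a * ennreal (A x) + ennreal b * ennreal (B x)) \<partial>lborel)"
  proof (rule nn_integral_mono)
    fix x
    show "ennreal (indicator S x * \<phi> x) \<le> ennreal a * ennreal (A x) + ennreal b * ennreal (B x)"
    proof (cases "x \<in> S")
      case True
      then have "\<phi> x \<le> a * A x + b * B x" by (rule le)
      then have "ennreal (\<phi> x) \<le> ennreal (a * A x + b * B x)" by (rule ennreal_leI)
      also have "\<dots> = ennreal a * ennreal (A x) + ennreal b * ennreal (B x)"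
        using a b A0[of x] B0[of x] by (simp add: ennreal_plus ennreal_mult)
      finally show ?thesis using True by simp
    next
      case False
      then show ?thesis by simp
    qed
  qed
  also have "\<dots> = ennreal a * (\<integral>\<^sup>+x. ennreal (A x) \<partial>lborel) + ennreal b * (\<integral>\<^sup>+x. ennreal (B x) \<partial>lborel)"
    using mA' mB' by (simp add: nn_integral_add nn_integral_cmult)
  also have "\<dots> \<le> ennreal a * ennreal IA + ennreal b * ennreal IB"
    by (intro add_mono mult_left_mono IA IB) auto
  also have "\<dots> = ennreal (a * IA + b * IB)"
    using a b IA0 IB0 by (simp add: ennreal_plus ennreal_mult)
  finally show ?thesis .
qed

lemma amgm:
  fixes u v e :: real
  assumes "0 < e"
  shows "u * v \<le> e / 2 * u\<^sup>2 + 1 / (2 * e) * v\<^sup>2"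
proof -
  have "0 \<le> (e * u - v)\<^sup>2 / e" using assms by simp
  also have "(e * u - v)\<^sup>2 / e = e * u\<^sup>2 - 2 * u * v + v\<^sup>2 / e"
    using assms by (simp add: power2_eq_square field_simps)
  finally have "2 * (u * v) \<le> e * u\<^sup>2 + v\<^sup>2 / e" by simp
  then show ?thesis using assms by (simp add: field_simps)
qed

lemma f_line_cont:
  assumes hol: "f holomorphic_on upper_half" and y: "0 < y"
  shows "continuous_on UNIV (\<lambda>x. f (Complex x y))"
proof -
  have cC: "continuous_on UNIV (\<lambda>x. Complex x y)" unfolding Complex_eq by (intro continuous_intros)
  have img: "(\<lambda>x. Complex x y) ` UNIV \<subseteq> upper_half" using y by (auto simp: upper_half_def)
  show ?thesis by (rule continuous_on_compose2[OF holomorphic_on_imp_continuous_on[OF hol] cC img])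
qed

lemma f_vline_cont:
  assumes hol: "f holomorphic_on upper_half" and y: "0 < y1"
  shows "continuous_on {y1..y2} (\<lambda>y. f (Complex x y))"
proof -
  have cC: "continuous_on {y1..y2} (\<lambda>y. Complex x y)" unfolding Complex_eq by (intro continuous_intros)
  have img: "(\<lambda>y. Complex x y) ` {y1..y2} \<subseteq> upper_half" using y by (auto simp: upper_half_def)
  show ?thesis by (rule continuous_on_compose2[OF holomorphic_on_imp_continuous_on[OF hol] cC img])
qed

lemma f_line_meas:
  assumes hol: "f holomorphic_on upper_half" and y: "0 < y"
  shows "(\<lambda>x. (cmod (f (Complex x y)))\<^sup>2) \<in> borel_measurable borel"
  by (intro borel_measurable_continuous_onI continuous_intros f_line_cont[OF hol y])

lemma f_vline_meas:
  assumes hol: "f holomorphic_on upper_half" and y: "0 < y1"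
  shows "(\<lambda>y. indicator {y1..y2} y * (cmod (f (Complex x y)))\<^sup>2) \<in> borel_measurable borel"
proof -
  have "(\<lambda>y. indicator {y1..y2} y *\<^sub>R (cmod (f (Complex x y)))\<^sup>2) \<in> borel_measurable borel"
    by (intro borel_measurable_continuous_on_indicator continuous_intros f_vline_cont[OF hol y]) simp
  then show ?thesis by simp
qed

lemma G_finite:
  assumes hol: "f holomorphic_on upper_half" and d: "0 < \<delta>"
    and sq: "\<And>y. 0 < y \<Longrightarrow> (\<integral>\<^sup>+x. ennreal ((cmod (f (Complex x y)))\<^sup>2) \<partial>lborel) \<le> ennreal Sr"
  shows "(\<integral>\<^sup>+x. (\<integral>\<^sup>+y. ennreal (indicator {\<delta>..Y} y * (cmod (f (Complex x y)))\<^sup>2) \<partial>lborel) \<partial>lborel) < \<infinity>"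
proof -
  define Q where "Q x y = ennreal (indicator {\<delta>..Y} y * (cmod (f (Complex x (max \<delta> y))))\<^sup>2)" for x y
  have Qeq: "Q x y = ennreal (indicator {\<delta>..Y} y * (cmod (f (Complex x y)))\<^sup>2)" for x y
    by (auto simp: Q_def indicator_def max_def)
  have cP: "continuous_on UNIV (\<lambda>p::real \<times> real. Complex (fst p) (max \<delta> (snd p)))"
    unfolding Complex_eq by (intro continuous_intros)
  have img: "(\<lambda>p::real \<times> real. Complex (fst p) (max \<delta> (snd p))) ` UNIV \<subseteq> upper_half"
    using d by (auto simp: upper_half_def)
  have cF: "continuous_on UNIV (\<lambda>p::real \<times> real. f (Complex (fst p) (max \<delta> (snd p))))"
    by (rule continuous_on_compose2[OF holomorphic_on_imp_continuous_on[OF hol] cP img])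
  have m1: "(\<lambda>p::real \<times> real. (cmod (f (Complex (fst p) (max \<delta> (snd p)))))\<^sup>2) \<in> borel_measurable borel"
    by (intro borel_measurable_continuous_onI continuous_intros cF)
  have ms: "(snd :: real \<times> real \<Rightarrow> real) \<in> borel_measurable borel"
    by (intro borel_measurable_continuous_onI continuous_intros)
  have mi: "(indicator {\<delta>..Y} :: real \<Rightarrow> real) \<in> borel_measurable borel"
    by (rule borel_measurable_indicator) simp
  have m2: "(\<lambda>p::real \<times> real. indicator {\<delta>..Y} (snd p) :: real) \<in> borel_measurable borel"
    using measurable_compose[OF ms mi] by (simp add: o_def)
  have "(\<lambda>p::real \<times> real. Q (fst p) (snd p)) \<in> borel_measurable borel"
    unfolding Q_def using m1 m2 by measurable
  then have mQ: "(\<lambda>(x, y). Q x y) \<in> borel_measurable (lborel \<Otimes>\<^sub>M lborel)"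
    unfolding lborel_prod by (simp add: case_prod_beta')
  have "(\<integral>\<^sup>+x. (\<integral>\<^sup>+y. Q x y \<partial>lborel) \<partial>lborel) = (\<integral>\<^sup>+y. (\<integral>\<^sup>+x. Q x y \<partial>lborel) \<partial>lborel)"
    by (rule lborel_pair.Fubini'[OF mQ, symmetric])
  also have "\<dots> \<le> (\<integral>\<^sup>+y. ennreal Sr * indicator {\<delta>..Y} y \<partial>lborel)"
  proof (rule nn_integral_mono)
    fix y
    show "(\<integral>\<^sup>+x. Q x y \<partial>lborel) \<le> ennreal Sr * indicator {\<delta>..Y} y"
    proof (cases "y \<in> {\<delta>..Y}")
      case True
      then have "0 < y" using d by simp
      then show ?thesis using True sq[of y] by (simp add: Qeq)
    next
      case False
      then show ?thesis by (simp add: Qeq)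
    qed
  qed
  also have "\<dots> = ennreal Sr * emeasure lborel {\<delta>..Y}"
    by (simp add: nn_integral_cmult_indicator)
  also have "\<dots> < \<infinity>" by (simp add: emeasure_lborel_Icc_eq ennreal_mult_less_top)
  finally show ?thesis by (simp add: Qeq)
qed

lemma rel_id:
  assumes fe: "\<forall>z. f z = (\<Prod>l\<in>L. (z - Complex 0 l)) * g z"
    and he: "\<forall>z. h z = g z * (\<Prod>l\<in>L. (z - Complex 0 (2 * \<delta> - l)))"
  shows "cmod (h z) * (\<Prod>l\<in>L. cmod (z - Complex 0 l)) = cmod (f z) * (\<Prod>l\<in>L. cmod (z - Complex 0 (2 * \<delta> - l)))"
  using fe he by (simp add: norm_mult prod_norm mult_ac)

lemma rel_bottom:
  assumes fe: "\<forall>z. f z = (\<Prod>l\<in>L. (z - Complex 0 l)) * g z"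
    and he: "\<forall>z. h z = g z * (\<Prod>l\<in>L. (z - Complex 0 (2 * \<delta> - l)))"
    and dl: "\<forall>l\<in>L. \<delta> < l"
  shows "cmod (h (Complex x \<delta>)) = cmod (f (Complex x \<delta>))"
proof -
  have eq: "cmod (Complex x \<delta> - Complex 0 (2 * \<delta> - l)) = cmod (Complex x \<delta> - Complex 0 l)" for l
  proof -
    have "Complex x \<delta> - Complex 0 (2 * \<delta> - l) = Complex x (l - \<delta>)" by (simp add: complex_eq_iff)
    moreover have "Complex x \<delta> - Complex 0 l = Complex x (\<delta> - l)" by (simp add: complex_eq_iff)
    moreover have "(l - \<delta>)\<^sup>2 = (\<delta> - l)\<^sup>2" by (simp add: power2_commute)
    ultimately show ?thesis by (simp add: complex_norm)
  qed
  have pos: "0 < (\<Prod>l\<in>L. cmod (Complex x \<delta> - Complex 0 l))"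
  proof (rule prod_pos)
    fix l assume "l \<in> L"
    then have "\<delta> \<noteq> l" using dl by auto
    then have "Complex x \<delta> - Complex 0 l \<noteq> 0" by (simp add: complex_eq_iff)
    then show "0 < cmod (Complex x \<delta> - Complex 0 l)" by simp
  qed
  have "cmod (h (Complex x \<delta>)) * (\<Prod>l\<in>L. cmod (Complex x \<delta> - Complex 0 l))
      = cmod (f (Complex x \<delta>)) * (\<Prod>l\<in>L. cmod (Complex x \<delta> - Complex 0 l))"
    using rel_id[OF fe he, of "Complex x \<delta>"] by (simp add: eq)
  then show ?thesis using pos by simp
qed

lemma rel_far:
  assumes fe: "\<forall>z. f z = (\<Prod>l\<in>L. (z - Complex 0 l)) * g z"
    and he: "\<forall>z. h z = g z * (\<Prod>l\<in>L. (z - Complex 0 (2 * \<delta> - l)))"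
    and finL: "finite L" and Lp: "\<forall>l\<in>L. 0 < l \<and> l \<le> M \<and> \<delta> < l" and d: "0 < \<delta>"
    and far: "2 * M \<le> \<bar>Re w\<bar> \<or> 3 * M \<le> Im w"
  shows "cmod (h w) \<le> 2 ^ card L * cmod (f w)"
proof -
  have low: "2 * l \<le> cmod (w - Complex 0 l)" if l: "l \<in> L" for l
  proof -
    have lM: "0 < l" "l \<le> M" using Lp l by auto
    show ?thesis
    proof (cases "2 * M \<le> \<bar>Re w\<bar>")
      case True
      have "\<bar>Re (w - Complex 0 l)\<bar> \<le> cmod (w - Complex 0 l)" by (rule abs_Re_le_cmod)
      then show ?thesis using True lM by simp
    next
      case False
      then have "3 * M \<le> Im w" using far by simp
      have "\<bar>Im (w - Complex 0 l)\<bar> \<le> cmod (w - Complex 0 l)" by (rule abs_Im_le_cmod)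
      then show ?thesis using \<open>3 * M \<le> Im w\<close> lM by simp
    qed
  qed
  have up: "cmod (w - Complex 0 (2 * \<delta> - l)) \<le> 2 * cmod (w - Complex 0 l)" if l: "l \<in> L" for l
  proof -
    have lp: "0 < l" "\<delta> < l" using Lp l by auto
    have "w - Complex 0 (2 * \<delta> - l) = (w - Complex 0 l) + Complex 0 (2 * l - 2 * \<delta>)"
      by (simp add: complex_eq_iff)
    then have "cmod (w - Complex 0 (2 * \<delta> - l)) \<le> cmod (w - Complex 0 l) + cmod (Complex 0 (2 * l - 2 * \<delta>))"
      by (metis norm_triangle_ineq)
    also have "cmod (Complex 0 (2 * l - 2 * \<delta>)) = 2 * l - 2 * \<delta>"
      using lp by (simp add: complex_norm)
    finally show ?thesis using low[OF l] d by simp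
  qed
  have pos: "0 < (\<Prod>l\<in>L. cmod (w - Complex 0 l))"
  proof (rule prod_pos)
    fix l assume l: "l \<in> L"
    then have "0 < l" using Lp by auto
    then have "0 < 2 * l" by simp
    then show "0 < cmod (w - Complex 0 l)" using low[OF l] by (rule less_le_trans)
  qed
  have "(\<Prod>l\<in>L. cmod (w - Complex 0 (2 * \<delta> - l))) \<le> (\<Prod>l\<in>L. 2 * cmod (w - Complex 0 l))"
    by (rule prod_mono) (use up in auto)
  also have "\<dots> = 2 ^ card L * (\<Prod>l\<in>L. cmod (w - Complex 0 l))"
    by (simp add: prod.distrib)
  finally have Q: "(\<Prod>l\<in>L. cmod (w - Complex 0 (2 * \<delta> - l))) \<le> 2 ^ card L * (\<Prod>l\<in>L. cmod (w - Complex 0 l))" .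
  have "cmod (h w) * (\<Prod>l\<in>L. cmod (w - Complex 0 l)) = cmod (f w) * (\<Prod>l\<in>L. cmod (w - Complex 0 (2 * \<delta> - l)))"
    by (rule rel_id[OF fe he])
  also have "\<dots> \<le> cmod (f w) * (2 ^ card L * (\<Prod>l\<in>L. cmod (w - Complex 0 l)))"
    by (rule mult_left_mono[OF Q]) simp
  finally have "cmod (h w) * (\<Prod>l\<in>L. cmod (w - Complex 0 l)) \<le> (2 ^ card L * cmod (f w)) * (\<Prod>l\<in>L. cmod (w - Complex 0 l))"
    by (simp add: mult_ac)
  then show ?thesis using pos by simp
qed

lemma half_aux:
  fixes s x y :: real
  assumes "x \<le> y"
  shows "1 / 2 * s + 1 / 2 * x \<le> (s + y) / 2"
  using assms by simp

lemma prod_bound: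
  assumes fH: "f \<in> H2" and t: "0 < t" and finL: "finite L"
    and Lz: "\<forall>l\<in>L. 0 < l \<and> f (Complex 0 l) = 0"
  shows "cmod (f (Complex 0 t)) * (\<Prod>l\<in>L. (t + l))
         \<le> (enn2real (H2_sqnorm f) + 2 * Jc / t) / (2 * pi) * (\<Prod>l\<in>L. \<bar>t - l\<bar>)"
proof -
  have hol: "f holomorphic_on upper_half" and fin: "H2_sqnorm f < \<infinity>" using fH by (auto simp: H2_def)
  define Sr where "Sr = enn2real (H2_sqnorm f)"
  have Sr0: "0 \<le> Sr" by (simp add: Sr_def)
  have HS: "H2_sqnorm f = ennreal Sr" using fin by (simp add: Sr_def)
  have sq: "(\<integral>\<^sup>+x. ennreal ((cmod (f (Complex x y)))\<^sup>2) \<partial>lborel) \<le> ennreal Sr" if y: "0 < y" for y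
  proof -
    have "(\<integral>\<^sup>+x. ennreal ((cmod (f (Complex x y)))\<^sup>2) \<partial>lborel) \<le> H2_sqnorm f"
      unfolding H2_sqnorm_def by (rule SUP_upper) (use y in simp)
    then show ?thesis using HS by simp
  qed
  have J0: "0 \<le> Jc" by (simp add: Jc_def)
  have LU: "\<forall>l\<in>L. Complex 0 l \<in> upper_half \<and> f (Complex 0 l) = 0"
    using Lz by (auto simp: upper_half_def)
  obtain g where g: "g holomorphic_on upper_half" "\<forall>z. f z = (\<Prod>l\<in>L. (z - Complex 0 l)) * g z"
    using factor_zeros[OF hol upper_half_open finL LU] by blast
  define n where "n = card L"
  define C :: real where "C = 2 ^ n"
  have C1: "1 \<le> C" by (simp add: C_def)
  define M where "M = 1 + (\<Sum>l\<in>L. l)"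
  have lM: "l \<le> M" if "l \<in> L" for l
  proof -
    have "l \<le> (\<Sum>l\<in>L. l)" by (rule member_le_sum[OF that]) (use Lz finL in auto)
    then show ?thesis by (simp add: M_def)
  qed
  have M1: "1 \<le> M" unfolding M_def using Lz by (simp add: sum_nonneg less_imp_le)
  define m0 where "m0 = Min (insert t L)"
  have m0in: "m0 \<in> insert t L" unfolding m0_def by (rule Min_in) (use finL in auto)
  have m0pos: "0 < m0" using m0in Lz t by auto
  have m0le: "m0 \<le> l" if "l \<in> L" for l unfolding m0_def using finL that by simp
  define \<delta> where "\<delta> = min (t / (4 * (real n + 1))) (m0 / 2)"
  have dpos: "0 < \<delta>" using t m0pos by (simp add: \<delta>_def)
  have dl: "\<delta> < l" if "l \<in> L" for l
    using m0le[OF that] m0pos by (simp add: \<delta>_def)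
  have dt4: "\<delta> \<le> t / 4"
  proof -
    have "t / (4 * (real n + 1)) \<le> t / 4" by (rule divide_left_mono) (use t in auto)
    moreover have "\<delta> \<le> t / (4 * (real n + 1))" unfolding \<delta>_def by (rule min.cobounded1)
    ultimately show ?thesis by linarith
  qed
  have dn: "real n * (2 * \<delta> / t) \<le> 1 / 2"
  proof -
    have "\<delta> \<le> t / (4 * (real n + 1))" by (simp add: \<delta>_def)
    then have "2 * \<delta> / t \<le> 1 / (2 * (real n + 1))" using t by (simp add: field_simps)
    then have "real n * (2 * \<delta> / t) \<le> real n * (1 / (2 * (real n + 1)))" by (rule mult_left_mono) simp
    also have "\<dots> \<le> 1 / 2" by (simp add: field_simps)
    finally show ?thesis .
  qed
  define h where "h z = g z * (\<Prod>l\<in>L. (z - Complex 0 (2 * \<delta> - l)))" for z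
  have holh: "h holomorphic_on upper_half" unfolding h_def by (intro holomorphic_intros g(1))
  have he: "\<forall>z. h z = g z * (\<Prod>l\<in>L. (z - Complex 0 (2 * \<delta> - l)))" by (simp add: h_def)
  have Lp: "\<forall>l\<in>L. 0 < l \<and> l \<le> M \<and> \<delta> < l" using Lz lM dl by auto
  have far: "cmod (h w) \<le> C * cmod (f w)" if "2 * M \<le> \<bar>Re w\<bar> \<or> 3 * M \<le> Im w" for w
    using rel_far[OF g(2) he finL Lp dpos that] by (simp add: C_def n_def)
  have bot: "cmod (h (Complex x \<delta>)) = cmod (f (Complex x \<delta>))" for x
    by (rule rel_bottom[OF g(2) he]) (use dl in auto)
  define F where "F w = h w / (w - Complex 0 t)" for w
  have claim: "2 * pi * cmod (h (Complex 0 t)) \<le> (Sr + 2 * Jc / t) / 2"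
  proof (rule field_le_epsilon)
    fix \<eta> :: real assume \<eta>: "0 < \<eta>"
    define \<epsilon> where "\<epsilon> = \<eta> / (6 * (Sr + 1)) / C"
    have \<epsilon>: "0 < \<epsilon>" using \<eta> C1 Sr0 by (simp add: \<epsilon>_def)
    have epsS: "C * \<epsilon> / 2 * Sr \<le> \<eta> / 12"
    proof -
      have S1: "0 < Sr + 1" using Sr0 by simp
      have Cn: "C \<noteq> 0" using C1 by simp
      have Ce: "C * \<epsilon> = \<eta> / (6 * (Sr + 1))" using Cn unfolding \<epsilon>_def by simp
      have "C * \<epsilon> / 2 * Sr = \<eta> / (6 * (Sr + 1)) / 2 * Sr" using Ce by simp
      also have "\<dots> = \<eta> / 12 * (Sr / (Sr + 1))" using S1 by (simp add: field_simps)
      finally have "C * \<epsilon> / 2 * Sr = \<eta> / 12 * (Sr / (Sr + 1))" .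
      also have "\<dots> \<le> \<eta> / 12 * 1" using \<eta> Sr0 by (intro mult_left_mono) auto
      finally show ?thesis by simp
    qed
    define Y where "Y = t + 1 + 3 * M + 4 * C * Jc / (\<epsilon> * \<eta>)"
    have q0: "0 \<le> 4 * C * Jc / (\<epsilon> * \<eta>)" using C1 J0 \<epsilon> \<eta> by simp
    have Yt: "t < Y" and Y3: "3 * M \<le> Y" and Y0: "0 < Y" using q0 M1 t by (simp_all add: Y_def)
    have Yb: "C / (2 * \<epsilon>) * (Jc / (Y - t)) \<le> \<eta> / 8"
    proof -
      have "4 * C * Jc / (\<epsilon> * \<eta>) \<le> Y - t" using M1 by (simp add: Y_def)
      then have "4 * C * Jc \<le> (Y - t) * (\<epsilon> * \<eta>)" using \<epsilon> \<eta> by (simp add: divide_le_eq)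
      then show ?thesis using \<epsilon> \<eta> Yt by (simp add: field_simps)
    qed
    define X0 where "X0 = 2 * M + 1 + 8 * C * (1 + Y) / \<eta>"
    have X0q: "0 \<le> 8 * C * (1 + Y) / \<eta>" using C1 Y0 \<eta> by simp
    have X01: "1 \<le> X0" and X0M: "2 * M \<le> X0" using X0q M1 by (simp_all add: X0_def)
    have Xb: "C / (2 * X) * (1 + (Y - \<delta>)) \<le> \<eta> / 16" if X: "X0 \<le> X" for X
    proof -
      have Xp: "0 < X" using X X01 by simp
      have "8 * C * (1 + Y) / \<eta> \<le> X" using X M1 by (simp add: X0_def)
      then have "8 * C * (1 + Y) \<le> X * \<eta>" using \<eta> by (simp add: divide_le_eq)
      then have "C / (2 * X) * (1 + Y) \<le> \<eta> / 16" using Xp \<eta> by (simp add: field_simps)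
      moreover have "C / (2 * X) * (1 + (Y - \<delta>)) \<le> C / (2 * X) * (1 + Y)"
        using Xp C1 dpos by (intro mult_left_mono) auto
      ultimately show ?thesis by linarith
    qed
    define G where "G x = (\<integral>\<^sup>+y. ennreal (indicator {\<delta>..Y} y * (cmod (f (Complex x y)))\<^sup>2) \<partial>lborel)" for x
    have Gfin: "(\<integral>\<^sup>+x. G x \<partial>lborel) < \<infinity>" unfolding G_def by (rule G_finite[OF hol dpos sq])
    obtain X1 where X1: "X0 \<le> X1" "G X1 \<le> 1" using exists_small_right[OF Gfin] by blast
    obtain X2' where X2': "X2' \<le> - X0" "G X2' \<le> 1" using exists_small_left[OF Gfin] by blast
    define X2 where "X2 = - X2'"
    have X2: "X0 \<le> X2" "G (- X2) \<le> 1" using X2' by (simp_all add: X2_def)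
    have X1p: "0 < X1" and X2p: "0 < X2" using X1 X2 X01 by simp_all
    have dt: "\<delta> < t" using dt4 t by simp
    have R: "ennreal (2 * pi * cmod (h (Complex 0 t))) \<le>
     (\<integral>\<^sup>+x. ennreal (indicator {-X2..X1} x * cmod (h (Complex x \<delta>) / (Complex x \<delta> - Complex 0 t))) \<partial>lborel)
   + (\<integral>\<^sup>+y. ennreal (indicator {\<delta>..Y} y * cmod (h (Complex X1 y) / (Complex X1 y - Complex 0 t))) \<partial>lborel)
   + (\<integral>\<^sup>+x. ennreal (indicator {-X2..X1} x * cmod (h (Complex x Y) / (Complex x Y - Complex 0 t))) \<partial>lborel)
   + (\<integral>\<^sup>+y. ennreal (indicator {\<delta>..Y} y * cmod (h (Complex (-X2) y) / (Complex (-X2) y - Complex 0 t))) \<partial>lborel)"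
      by (rule rect_ineq[OF holh dpos dt Yt X1p X2p])
    have td: "0 < t - \<delta>" using dt by simp
    have I1: "(\<integral>\<^sup>+x. ennreal (indicator {-X2..X1} x * cmod (h (Complex x \<delta>) / (Complex x \<delta> - Complex 0 t))) \<partial>lborel)
              \<le> ennreal (1 / 2 * Sr + 1 / 2 * (Jc / (t - \<delta>)))"
    proof (rule int_bound[where A = "\<lambda>x. (cmod (f (Complex x \<delta>)))\<^sup>2" and B = "\<lambda>x. 1 / (x\<^sup>2 + (t - \<delta>)\<^sup>2)"])
      fix x
      have n2: "(cmod (Complex x \<delta> - Complex 0 t))\<^sup>2 = x\<^sup>2 + (t - \<delta>)\<^sup>2"
      proof -
        have "Complex x \<delta> - Complex 0 t = Complex x (\<delta> - t)" by (simp add: complex_eq_iff)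
        then show ?thesis by (simp add: cmod_power2 power2_commute)
      qed
      have "cmod (h (Complex x \<delta>) / (Complex x \<delta> - Complex 0 t))
            = cmod (f (Complex x \<delta>)) * (1 / cmod (Complex x \<delta> - Complex 0 t))"
        by (simp add: norm_divide bot)
      also have "\<dots> \<le> 1 / 2 * (cmod (f (Complex x \<delta>)))\<^sup>2 + 1 / (2 * 1) * (1 / cmod (Complex x \<delta> - Complex 0 t))\<^sup>2"
        by (rule amgm) simp
      also have "(1 / cmod (Complex x \<delta> - Complex 0 t))\<^sup>2 = 1 / (x\<^sup>2 + (t - \<delta>)\<^sup>2)"
        by (simp add: power_one_over n2)
      finally show "cmod (h (Complex x \<delta>) / (Complex x \<delta> - Complex 0 t))
            \<le> 1 / 2 * (cmod (f (Complex x \<delta>)))\<^sup>2 + 1 / 2 * (1 / (x\<^sup>2 + (t - \<delta>)\<^sup>2))" by simp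
    next
      show "(\<lambda>x. (cmod (f (Complex x \<delta>)))\<^sup>2) \<in> borel_measurable borel" by (rule f_line_meas[OF hol dpos])
      show "(\<lambda>x. 1 / (x\<^sup>2 + (t - \<delta>)\<^sup>2)) \<in> borel_measurable borel" by measurable
      show "(\<integral>\<^sup>+x. ennreal ((cmod (f (Complex x \<delta>)))\<^sup>2) \<partial>lborel) \<le> ennreal Sr" by (rule sq[OF dpos])
      show "(\<integral>\<^sup>+x. ennreal (1 / (x\<^sup>2 + (t - \<delta>)\<^sup>2)) \<partial>lborel) \<le> ennreal (Jc / (t - \<delta>))"
        using int_inv_sq[OF td] by simp
    qed (use Sr0 J0 td in \<open>auto simp: add_nonneg_nonneg\<close>)
    have I3: "(\<integral>\<^sup>+x. ennreal (indicator {-X2..X1} x * cmod (h (Complex x Y) / (Complex x Y - Complex 0 t))) \<partial>lborel)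
              \<le> ennreal (C * \<epsilon> / 2 * Sr + C / (2 * \<epsilon>) * (Jc / (Y - t)))"
    proof (rule int_bound[where A = "\<lambda>x. (cmod (f (Complex x Y)))\<^sup>2" and B = "\<lambda>x. 1 / (x\<^sup>2 + (Y - t)\<^sup>2)"])
      fix x
      have n2: "(cmod (Complex x Y - Complex 0 t))\<^sup>2 = x\<^sup>2 + (Y - t)\<^sup>2"
      proof -
        have "Complex x Y - Complex 0 t = Complex x (Y - t)" by (simp add: complex_eq_iff)
        then show ?thesis by (simp add: cmod_power2)
      qed
      have hb: "cmod (h (Complex x Y)) \<le> C * cmod (f (Complex x Y))" by (rule far) (use Y3 in simp)
      have "cmod (h (Complex x Y) / (Complex x Y - Complex 0 t))
            = cmod (h (Complex x Y)) * (1 / cmod (Complex x Y - Complex 0 t))"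
        by (simp add: norm_divide)
      also have "\<dots> \<le> C * cmod (f (Complex x Y)) * (1 / cmod (Complex x Y - Complex 0 t))"
        by (intro mult_right_mono hb) simp
      also have "\<dots> = C * (cmod (f (Complex x Y)) * (1 / cmod (Complex x Y - Complex 0 t)))" by simp
      also have "\<dots> \<le> C * (\<epsilon> / 2 * (cmod (f (Complex x Y)))\<^sup>2 + 1 / (2 * \<epsilon>) * (1 / cmod (Complex x Y - Complex 0 t))\<^sup>2)"
        by (intro mult_left_mono amgm \<epsilon>) (use C1 in simp)
      also have "(1 / cmod (Complex x Y - Complex 0 t))\<^sup>2 = 1 / (x\<^sup>2 + (Y - t)\<^sup>2)"
        by (simp add: power_one_over n2)
      finally show "cmod (h (Complex x Y) / (Complex x Y - Complex 0 t))
            \<le> C * \<epsilon> / 2 * (cmod (f (Complex x Y)))\<^sup>2 + C / (2 * \<epsilon>) * (1 / (x\<^sup>2 + (Y - t)\<^sup>2))"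
        by (simp add: algebra_simps)
    next
      show "(\<lambda>x. (cmod (f (Complex x Y)))\<^sup>2) \<in> borel_measurable borel" by (rule f_line_meas[OF hol Y0])
      show "(\<lambda>x. 1 / (x\<^sup>2 + (Y - t)\<^sup>2)) \<in> borel_measurable borel" by measurable
      show "(\<integral>\<^sup>+x. ennreal ((cmod (f (Complex x Y)))\<^sup>2) \<partial>lborel) \<le> ennreal Sr" by (rule sq[OF Y0])
      have "0 < Y - t" using Yt by simp
      then show "(\<integral>\<^sup>+x. ennreal (1 / (x\<^sup>2 + (Y - t)\<^sup>2)) \<partial>lborel) \<le> ennreal (Jc / (Y - t))"
        using int_inv_sq by simp
    qed (use Sr0 J0 Yt C1 \<epsilon> in \<open>auto simp: add_nonneg_nonneg\<close>)
    have side: "(\<integral>\<^sup>+y. ennreal (indicator {\<delta>..Y} y * cmod (h (Complex X y) / (Complex X y - Complex 0 t))) \<partial>lborel)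
              \<le> ennreal (C / (2 * \<bar>X\<bar>) * 1 + C / (2 * \<bar>X\<bar>) * (Y - \<delta>))"
      if XX: "X0 \<le> \<bar>X\<bar>" and GX: "G X \<le> 1" for X
    proof (rule int_bound[where A = "\<lambda>y. indicator {\<delta>..Y} y * (cmod (f (Complex X y)))\<^sup>2" and B = "\<lambda>y. indicator {\<delta>..Y} y"])
      have Xp: "0 < \<bar>X\<bar>" using XX X01 by simp
      fix y assume y: "y \<in> {\<delta>..Y}"
      have hb: "cmod (h (Complex X y)) \<le> C * cmod (f (Complex X y))" by (rule far) (use XX X0M in simp)
      have dX: "\<bar>X\<bar> \<le> cmod (Complex X y - Complex 0 t)"
        using abs_Re_le_cmod[of "Complex X y - Complex 0 t"] by simp
      have "cmod (h (Complex X y) / (Complex X y - Complex 0 t))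
            = cmod (h (Complex X y)) / cmod (Complex X y - Complex 0 t)"
        by (simp add: norm_divide)
      also have "\<dots> \<le> C * cmod (f (Complex X y)) / \<bar>X\<bar>"
        using hb dX Xp C1 by (intro frac_le) auto
      also have "\<dots> = C / \<bar>X\<bar> * (cmod (f (Complex X y)) * 1)" by simp
      also have "\<dots> \<le> C / \<bar>X\<bar> * (1 / 2 * (cmod (f (Complex X y)))\<^sup>2 + 1 / (2 * 1) * 1\<^sup>2)"
        by (intro mult_left_mono amgm) (use C1 Xp in simp_all)
      finally show "cmod (h (Complex X y) / (Complex X y - Complex 0 t))
            \<le> C / (2 * \<bar>X\<bar>) * (indicator {\<delta>..Y} y * (cmod (f (Complex X y)))\<^sup>2) + C / (2 * \<bar>X\<bar>) * indicator {\<delta>..Y} y"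
        using y by (simp add: algebra_simps)
    next
      show "(\<lambda>y. indicator {\<delta>..Y} y * (cmod (f (Complex X y)))\<^sup>2) \<in> borel_measurable borel"
        by (rule f_vline_meas[OF hol dpos])
      show "(\<lambda>y. indicator {\<delta>..Y} y :: real) \<in> borel_measurable borel"
        by (rule borel_measurable_indicator) simp
      show "(\<integral>\<^sup>+y. ennreal (indicator {\<delta>..Y} y * (cmod (f (Complex X y)))\<^sup>2) \<partial>lborel) \<le> ennreal 1"
        using GX by (simp add: G_def)
      have "(\<integral>\<^sup>+y. ennreal (indicator {\<delta>..Y} y) \<partial>lborel) = emeasure lborel {\<delta>..Y}"
        by (simp add: ennreal_indicator)
      also have "\<dots> = ennreal (Y - \<delta>)" using Yt dt by (simp add: emeasure_lborel_Icc_eq)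
      finally show "(\<integral>\<^sup>+y. ennreal (indicator {\<delta>..Y} y) \<partial>lborel) \<le> ennreal (Y - \<delta>)" by simp
    qed (use C1 Yt dt in \<open>auto simp: indicator_def\<close>)
    have I2: "(\<integral>\<^sup>+y. ennreal (indicator {\<delta>..Y} y * cmod (h (Complex X1 y) / (Complex X1 y - Complex 0 t))) \<partial>lborel)
              \<le> ennreal (C / (2 * X1) * 1 + C / (2 * X1) * (Y - \<delta>))"
      using side[of X1] X1 X1p by simp
    have I4: "(\<integral>\<^sup>+y. ennreal (indicator {\<delta>..Y} y * cmod (h (Complex (-X2) y) / (Complex (-X2) y - Complex 0 t))) \<partial>lborel)
              \<le> ennreal (C / (2 * X2) * 1 + C / (2 * X2) * (Y - \<delta>))"
      using side[of "-X2"] X2 X2p by simp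
    define b1 where "b1 = 1 / 2 * Sr + 1 / 2 * (Jc / (t - \<delta>))"
    define b2 where "b2 = C / (2 * X1) * 1 + C / (2 * X1) * (Y - \<delta>)"
    define b3 where "b3 = C * \<epsilon> / 2 * Sr + C / (2 * \<epsilon>) * (Jc / (Y - t))"
    define b4 where "b4 = C / (2 * X2) * 1 + C / (2 * X2) * (Y - \<delta>)"
    have b0: "0 \<le> b1" "0 \<le> b2" "0 \<le> b3" "0 \<le> b4"
      using Sr0 J0 td C1 X1p X2p Yt dt \<epsilon> by (simp_all add: b1_def b2_def b3_def b4_def)
    have "ennreal (2 * pi * cmod (h (Complex 0 t))) \<le> ennreal b1 + ennreal b2 + ennreal b3 + ennreal b4"
      using R I1 I2 I3 I4 unfolding b1_def b2_def b3_def b4_def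
      by (meson add_mono order_trans)
    also have "\<dots> = ennreal (b1 + b2 + b3 + b4)" using b0 by (simp add: ennreal_plus)
    finally have E: "ennreal (2 * pi * cmod (h (Complex 0 t))) \<le> ennreal (b1 + b2 + b3 + b4)" .
    have s0: "0 \<le> b1 + b2 + b3 + b4" using b0 by simp
    have tot: "2 * pi * cmod (h (Complex 0 t)) \<le> b1 + b2 + b3 + b4"
      using iffD1[OF ennreal_le_iff[OF s0] E] .
    have "b1 \<le> (Sr + 2 * Jc / t) / 2"
    proof -
      have "t / 2 \<le> t - \<delta>" using dt4 t by simp
      then have "Jc / (t - \<delta>) \<le> Jc / (t / 2)" using J0 t by (intro divide_left_mono) auto
      also have "Jc / (t / 2) = 2 * Jc / t" by simp
      finally have j: "Jc / (t - \<delta>) \<le> 2 * Jc / t" .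
      then show ?thesis unfolding b1_def by (rule half_aux)
    qed
    moreover have "b2 \<le> \<eta> / 16" unfolding b2_def by (subst distrib_left[symmetric]) (rule Xb[OF X1(1)])
    moreover have "b4 \<le> \<eta> / 16" unfolding b4_def by (subst distrib_left[symmetric]) (rule Xb[OF X2(1)])
    moreover have "b3 \<le> \<eta> / 12 + \<eta> / 8" unfolding b3_def using epsS Yb by simp
    ultimately show "2 * pi * cmod (h (Complex 0 t)) \<le> (Sr + 2 * Jc / t) / 2 + \<eta>"
      using tot \<eta> by linarith
  qed
  have hf: "cmod (h (Complex 0 t)) * (\<Prod>l\<in>L. \<bar>t - l\<bar>) = cmod (f (Complex 0 t)) * (\<Prod>l\<in>L. (t + l - 2 * \<delta>))"
  proof -
    have e1: "cmod (Complex 0 t - Complex 0 l) = \<bar>t - l\<bar>" for l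
    proof -
      have "Complex 0 t - Complex 0 l = \<i> * complex_of_real (t - l)" by (simp add: complex_eq_iff)
      then show ?thesis by (simp only: norm_mult norm_of_real) simp
    qed
    have e2: "cmod (Complex 0 t - Complex 0 (2 * \<delta> - l)) = t + l - 2 * \<delta>" if "l \<in> L" for l
    proof -
      have "0 < l" using Lz that by auto
      then have "0 < t + l - 2 * \<delta>" using dt4 t by linarith
      moreover have "Complex 0 t - Complex 0 (2 * \<delta> - l) = \<i> * complex_of_real (t + l - 2 * \<delta>)"
        by (simp add: complex_eq_iff)
      ultimately show ?thesis by (simp only: norm_mult norm_of_real) simp
    qed
    have "(\<Prod>l\<in>L. cmod (Complex 0 t - Complex 0 (2 * \<delta> - l))) = (\<Prod>l\<in>L. (t + l - 2 * \<delta>))"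
      by (rule prod.cong) (simp_all add: e2)
    then show ?thesis using rel_id[OF g(2) he, of "Complex 0 t"] by (simp add: e1)
  qed
  have pp: "(\<Prod>l\<in>L. (t + l)) \<le> 2 * (\<Prod>l\<in>L. (t + l - 2 * \<delta>))"
  proof -
    define q where "q = 1 - 2 * \<delta> / t"
    have q0: "0 \<le> q" using dt4 t by (simp add: q_def field_simps)
    have "1 + real n * (- (2 * \<delta> / t)) \<le> (1 + (- (2 * \<delta> / t))) ^ n"
      by (rule Bernoulli_inequality) (use dt4 t in \<open>simp add: field_simps\<close>)
    then have qn: "1 / 2 \<le> q ^ n" using dn by (simp add: q_def)
    have "q ^ n * (\<Prod>l\<in>L. (t + l)) = (\<Prod>l\<in>L. q * (t + l))"
      by (simp add: prod.distrib n_def)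
    also have "\<dots> \<le> (\<Prod>l\<in>L. (t + l - 2 * \<delta>))"
    proof (rule prod_mono)
      fix l assume l: "l \<in> L"
      then have lp: "0 < l" using Lz by auto
      have "q * (t + l) = t + l - 2 * \<delta> - 2 * \<delta> * l / t" using t by (simp add: q_def field_simps)
      also have "\<dots> \<le> t + l - 2 * \<delta>" using lp dpos t by simp
      finally show "0 \<le> q * (t + l) \<and> q * (t + l) \<le> t + l - 2 * \<delta>"
        using q0 lp t by simp
    qed
    finally have "q ^ n * (\<Prod>l\<in>L. (t + l)) \<le> (\<Prod>l\<in>L. (t + l - 2 * \<delta>))" .
    moreover have "0 \<le> (\<Prod>l\<in>L. (t + l))" using Lz t by (intro prod_nonneg) (auto intro: add_nonneg_nonneg less_imp_le)
    ultimately have "1 / 2 * (\<Prod>l\<in>L. (t + l)) \<le> (\<Prod>l\<in>L. (t + l - 2 * \<delta>))"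
      using qn by (meson mult_right_mono order_trans)
    then show ?thesis by simp
  qed
  have "cmod (f (Complex 0 t)) * (\<Prod>l\<in>L. (t + l)) \<le> cmod (f (Complex 0 t)) * (2 * (\<Prod>l\<in>L. (t + l - 2 * \<delta>)))"
    by (rule mult_left_mono[OF pp]) simp
  also have "\<dots> = 2 * (cmod (h (Complex 0 t)) * (\<Prod>l\<in>L. \<bar>t - l\<bar>))" using hf by simp
  also have "\<dots> \<le> 2 * (((Sr + 2 * Jc / t) / (4 * pi)) * (\<Prod>l\<in>L. \<bar>t - l\<bar>))"
  proof -
    have "cmod (h (Complex 0 t)) \<le> (Sr + 2 * Jc / t) / (4 * pi)"
      using claim by (simp add: field_simps)
    then show ?thesis by (intro mult_left_mono mult_right_mono) (auto intro: prod_nonneg)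
  qed
  also have "\<dots> = (Sr + 2 * Jc / t) / (2 * pi) * (\<Prod>l\<in>L. \<bar>t - l\<bar>)" by simp
  finally show ?thesis by (simp add: Sr_def)
qed

lemma w_le1: "0 < (l::real) \<Longrightarrow> l / (l + 1)\<^sup>2 \<le> l"
proof -
  assume l: "0 < l"
  have "1 \<le> (l + 1)\<^sup>2" using l by (simp add: power2_eq_square) (smt (verit) mult_le_cancel_left1)
  then show ?thesis using l by (simp add: divide_le_eq mult_le_cancel_left1 less_imp_le)
qed

lemma w_le2: "0 < (l::real) \<Longrightarrow> l / (l + 1)\<^sup>2 \<le> 1 / l"
proof -
  assume l: "0 < l"
  have "l\<^sup>2 \<le> (l + 1)\<^sup>2" using l by (intro power_mono) auto
  then have "l * l \<le> (l + 1)\<^sup>2" by (simp add: power2_eq_square)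
  then show ?thesis using l by (simp add: field_simps)
qed

lemma qw:
  assumes t: "0 < (t::real)" and l: "0 < l"
  shows "min t (1 / t) * (l / (l + 1)\<^sup>2) \<le> 1 - \<bar>t - l\<bar> / (t + l)"
proof (cases "l \<le> t")
  case True
  have "1 - \<bar>t - l\<bar> / (t + l) = 2 * l / (t + l)" using True t l by (simp add: field_simps)
  also have "\<dots> \<ge> l / t"
  proof -
    have "t + l \<le> 2 * t" using True by simp
    then have "l * (t + l) \<le> (2 * l) * t" using l by (simp add: algebra_simps)
    then show ?thesis using t l by (simp add: divide_le_eq le_divide_eq field_simps)
  qed
  finally have a: "l / t \<le> 1 - \<bar>t - l\<bar> / (t + l)" .
  have "min t (1 / t) * (l / (l + 1)\<^sup>2) \<le> (1 / t) * l"
    using w_le1[OF l] t l by (intro mult_mono) auto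
  then show ?thesis using a by simp
next
  case False
  have "1 - \<bar>t - l\<bar> / (t + l) = 2 * t / (t + l)" using False t l by (simp add: field_simps)
  also have "\<dots> \<ge> t / l"
  proof -
    have "t + l \<le> 2 * l" using False by simp
    then have "t * (t + l) \<le> (2 * t) * l" using t by (simp add: algebra_simps)
    then show ?thesis using t l by (simp add: divide_le_eq le_divide_eq field_simps)
  qed
  finally have a: "t / l \<le> 1 - \<bar>t - l\<bar> / (t + l)" .
  have "min t (1 / t) * (l / (l + 1)\<^sup>2) \<le> t * (1 / l)"
    using w_le2[OF l] t l by (intro mult_mono) auto
  then show ?thesis using a by simp
qed

lemma exists_nonzero_point:
  assumes "f \<in> H2" "H2_nonzero f"
  shows "\<exists>t>0. f (Complex 0 t) \<noteq> 0"
proof (rule ccontr)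
  assume "\<not> ?thesis"
  then have z: "\<And>t. 0 < t \<Longrightarrow> f (Complex 0 t) = 0" by auto
  have hol: "f holomorphic_on upper_half" using assms(1) by (simp add: H2_def)
  define U where "U = (\<lambda>l. Complex 0 l) ` {0<..}"
  have lim: "Complex 0 1 islimpt U"
    unfolding islimpt_approachable
  proof (intro allI impI)
    fix e :: real assume e: "0 < e"
    have "Complex 0 (1 + e / 2) \<in> U" using e by (auto simp: U_def)
    moreover have "Complex 0 (1 + e / 2) \<noteq> Complex 0 1" using e by simp
    moreover have "dist (Complex 0 (1 + e / 2)) (Complex 0 1) < e"
    proof -
      have "Complex 0 (1 + e / 2) - Complex 0 1 = \<i> * complex_of_real (e / 2)" by (simp add: complex_eq_iff)
      then have "dist (Complex 0 (1 + e / 2)) (Complex 0 1) = e / 2"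
        using e by (simp only: dist_norm norm_mult norm_of_real) simp
      then show ?thesis using e by simp
    qed
    ultimately show "\<exists>x'\<in>U. x' \<noteq> Complex 0 1 \<and> dist x' (Complex 0 1) < e" by blast
  qed
  have "f w = 0" if w: "w \<in> upper_half" for w
  proof (rule analytic_continuation[OF hol upper_half_open])
    show "connected upper_half" by (rule convex_connected[OF upper_half_convex])
    show "U \<subseteq> upper_half" by (auto simp: U_def upper_half_def)
    show "Complex 0 1 \<in> upper_half" by (simp add: upper_half_def)
    show "Complex 0 1 islimpt U" by (rule lim)
    show "\<And>z. z \<in> U \<Longrightarrow> f z = 0" using z by (auto simp: U_def)
    show "w \<in> upper_half" by (rule w)
  qed
  then show False using assms(2) by (auto simp: H2_nonzero_def)
qed

lemma F_main:
  assumes fH: "f \<in> H2" and nz: "H2_nonzero f"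
  shows "(\<lambda>l. l / (l + 1)\<^sup>2) summable_on {l. 0 < l \<and> f (Complex 0 l) = 0}"
proof -
  obtain t where t: "0 < t" and ft: "f (Complex 0 t) \<noteq> 0"
    using exists_nonzero_point[OF fH nz] by blast
  define Z where "Z = {l. 0 < l \<and> f (Complex 0 l) = 0}"
  define c0 where "c0 = cmod (f (Complex 0 t))"
  define K where "K = (enn2real (H2_sqnorm f) + 2 * Jc / t) / (2 * pi)"
  define \<kappa> where "\<kappa> = min t (1 / t)"
  have c0: "0 < c0" using ft by (simp add: c0_def)
  have \<kappa>: "0 < \<kappa>" using t by (simp add: \<kappa>_def)
  have PB: "c0 * (\<Prod>l\<in>L. (t + l)) \<le> K * (\<Prod>l\<in>L. \<bar>t - l\<bar>)" if "finite L" "L \<subseteq> Z" for L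
    unfolding c0_def K_def by (rule prod_bound[OF fH t that(1)]) (use that(2) in \<open>auto simp: Z_def\<close>)
  have K: "c0 \<le> K" using PB[of "{}"] by simp
  then have Kp: "0 < K" using c0 by simp
  have bound: "(\<Sum>l\<in>L. l / (l + 1)\<^sup>2) \<le> ln (K / c0) / \<kappa>" if L: "finite L" "L \<subseteq> Z" for L
  proof -
    have lp: "\<And>l. l \<in> L \<Longrightarrow> 0 < l" using L by (auto simp: Z_def)
    define q where "q l = \<bar>t - l\<bar> / (t + l)" for l
    have tl: "0 < (\<Prod>l\<in>L. (t + l))" using lp t by (intro prod_pos) (simp add: add_pos_pos)
    have "c0 / K \<le> (\<Prod>l\<in>L. \<bar>t - l\<bar>) / (\<Prod>l\<in>L. (t + l))"
      using PB[OF L] tl Kp by (simp add: field_simps)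
    also have "\<dots> = (\<Prod>l\<in>L. q l)" by (simp add: q_def prod_dividef)
    also have "\<dots> \<le> (\<Prod>l\<in>L. exp (q l - 1))"
    proof (rule prod_mono)
      fix l assume "l \<in> L"
      have "0 \<le> q l" using lp[OF \<open>l \<in> L\<close>] t by (simp add: q_def)
      moreover have "1 + (q l - 1) \<le> exp (q l - 1)" by (rule exp_ge_add_one_self)
      ultimately show "0 \<le> q l \<and> q l \<le> exp (q l - 1)" by simp
    qed
    also have "\<dots> = exp (\<Sum>l\<in>L. (q l - 1))" by (simp add: exp_sum L(1))
    also have "\<dots> \<le> exp (\<Sum>l\<in>L. - (\<kappa> * (l / (l + 1)\<^sup>2)))"
    proof (intro exp_mono sum_mono)
      fix l assume "l \<in> L"
      show "q l - 1 \<le> - (\<kappa> * (l / (l + 1)\<^sup>2))"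
        using qw[OF t lp[OF \<open>l \<in> L\<close>]] by (simp add: q_def \<kappa>_def)
    qed
    also have "\<dots> = exp (- (\<kappa> * (\<Sum>l\<in>L. l / (l + 1)\<^sup>2)))"
      by (simp add: sum_negf sum_distrib_left)
    finally have e: "c0 / K \<le> exp (- (\<kappa> * (\<Sum>l\<in>L. l / (l + 1)\<^sup>2)))" .
    have "ln (c0 / K) \<le> - (\<kappa> * (\<Sum>l\<in>L. l / (l + 1)\<^sup>2))"
    proof -
      have "ln (c0 / K) \<le> ln (exp (- (\<kappa> * (\<Sum>l\<in>L. l / (l + 1)\<^sup>2))))"
        using e c0 Kp by (subst ln_le_cancel_iff) auto
      then show ?thesis by simp
    qed
    moreover have "ln (c0 / K) = - ln (K / c0)" using c0 Kp by (simp add: ln_div)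
    ultimately have "\<kappa> * (\<Sum>l\<in>L. l / (l + 1)\<^sup>2) \<le> ln (K / c0)" by simp
    then show ?thesis using \<kappa> by (simp add: field_simps)
  qed
  have "(\<lambda>l. l / (l + 1)\<^sup>2) summable_on Z"
  proof (rule nonneg_bdd_above_summable_on)
    show "\<And>x. x \<in> Z \<Longrightarrow> 0 \<le> x / (x + 1)\<^sup>2" by (simp add: Z_def)
    show "bdd_above (sum (\<lambda>l. l / (l + 1)\<^sup>2) ` {F. F \<subseteq> Z \<and> finite F})"
      by (rule bdd_aboveI[where M = "ln (K / c0) / \<kappa>"]) (auto intro: bound)
  qed
  then show ?thesis by (simp add: Z_def)
qed

theorem corollaryA4:
  fixes M :: "real measure"
  assumes "C_Carleson M"
  shows "\<not> H_strictly_positive M \<longleftrightarrow>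
    (\<exists>N. N \<subseteq> {0<..} \<and> countable N \<and> (\<lambda>l. l / (l + 1)\<^sup>2) summable_on N \<and>
         emeasure M ({0<..} - N) = 0)"
proof -
  have sM: "sets M = sets (restrict_space borel {0<..})"
    using assms by (simp add: C_Carleson_def measure_on_Rplus_def)
  have spM: "space M = {0<..}"
    using sets_eq_imp_space_eq[OF sM] by simp
  have intg: "\<And>f. f \<in> H2 \<Longrightarrow> integrable M (\<lambda>l. cnj (f (Complex 0 l)) * f (Complex 0 l))"
    using assms by (simp add: C_Carleson_def)
  have form_eq: "carleson_form M f f = complex_of_real (\<integral>l. (cmod (f (Complex 0 l)))\<^sup>2 \<partial>M)"
    and intr: "integrable M (\<lambda>l. (cmod (f (Complex 0 l)))\<^sup>2)" if "f \<in> H2" for f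
  proof -
    have eq: "(\<lambda>l. cnj (f (Complex 0 l)) * f (Complex 0 l)) = (\<lambda>l. complex_of_real ((cmod (f (Complex 0 l)))\<^sup>2))"
      by (rule ext) (metis complex_norm_square mult.commute)
    show "integrable M (\<lambda>l. (cmod (f (Complex 0 l)))\<^sup>2)"
      using intg[OF that] unfolding eq complex_of_real_integrable_eq .
    show "carleson_form M f f = complex_of_real (\<integral>l. (cmod (f (Complex 0 l)))\<^sup>2 \<partial>M)"
      unfolding carleson_form_def eq integral_complex_of_real ..
  qed
  show ?thesis
  proof
    assume "\<not> H_strictly_positive M"
    then obtain f where f: "f \<in> H2" "H2_nonzero f"
      and nf: "\<not> (\<exists>r>0. carleson_form M f f = complex_of_real r)"
      unfolding H_strictly_positive_def by blast
    define N where "N = {l. 0 < l \<and> f (Complex 0 l) = 0}"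
    have sN: "(\<lambda>l. l / (l + 1)\<^sup>2) summable_on N" using F_main[OF f] by (simp add: N_def)
    have "countable {x \<in> N. x / (x + 1)\<^sup>2 \<noteq> 0}" by (rule summable_countable_real[OF sN])
    also have "{x \<in> N. x / (x + 1)\<^sup>2 \<noteq> 0} = N"
      by (auto simp: N_def)
    finally have cN: "countable N" .
    have "(\<integral>l. (cmod (f (Complex 0 l)))\<^sup>2 \<partial>M) \<ge> 0" by simp
    with nf form_eq[OF f(1)] have z: "(\<integral>l. (cmod (f (Complex 0 l)))\<^sup>2 \<partial>M) = 0"
      by (metis less_eq_real_def)
    have AEf: "AE l in M. (cmod (f (Complex 0 l)))\<^sup>2 = 0"
      using integral_nonneg_eq_0_iff_AE[OF intr[OF f(1)]] z by simp
    define E where "E = {l \<in> space M. \<not> (cmod (f (Complex 0 l)))\<^sup>2 = 0}"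
    have meas: "E \<in> sets M"
    proof -
      have gm: "(\<lambda>l. (cmod (f (Complex 0 l)))\<^sup>2) \<in> borel_measurable M"
        using borel_measurable_integrable[OF intr[OF f(1)]] .
      have A: "(\<lambda>l. (cmod (f (Complex 0 l)))\<^sup>2) -` (-{0}) \<inter> space M \<in> sets M"
        by (rule measurable_sets[OF gm]) (intro borel_open, simp add: open_Compl)
      have B: "(\<lambda>l. (cmod (f (Complex 0 l)))\<^sup>2) -` (-{0}) \<inter> space M = E"
        unfolding E_def by blast
      show ?thesis using A unfolding B .
    qed
    have eE: "emeasure M E = 0"
      using iffD1[OF AE_iff_measurable[OF meas E_def[symmetric]] AEf] .
    have "E = {0<..} - N"
      by (auto simp: E_def spM N_def)
    then have "emeasure M ({0<..} - N) = 0" using eE by simp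
    then show "\<exists>N. N \<subseteq> {0<..} \<and> countable N \<and> (\<lambda>l. l / (l + 1)\<^sup>2) summable_on N \<and>
         emeasure M ({0<..} - N) = 0"
      using cN sN by (intro exI[of _ N]) (auto simp: N_def)
  next
    assume "\<exists>N. N \<subseteq> {0<..} \<and> countable N \<and> (\<lambda>l. l / (l + 1)\<^sup>2) summable_on N \<and>
         emeasure M ({0<..} - N) = 0"
    then obtain N where N: "N \<subseteq> {0<..}" "countable N" "(\<lambda>l. l / (l + 1)\<^sup>2) summable_on N"
      "emeasure M ({0<..} - N) = 0" by blast
    obtain f where f: "f \<in> H2" "H2_nonzero f" "\<forall>l\<in>N. f (Complex 0 l) = 0"
      using B_main[OF N(1-3)] by blast
    have "N \<in> sets borel" by (rule sets.countable[OF _ N(2)]) auto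
    then have "{0<..} - N \<in> sets (restrict_space borel {0<..})"
      by (subst sets_restrict_space_iff) auto
    then have mN: "{0<..} - N \<in> sets M" using sM by simp
    have "AE l in M. l \<in> N"
      using AE_iff_measurable[OF mN, of "\<lambda>l. l \<in> N"] N(4) by (auto simp: spM)
    then have "AE l in M. (cmod (f (Complex 0 l)))\<^sup>2 = 0"
      by eventually_elim (use f(3) in auto)
    then have "(\<integral>l. (cmod (f (Complex 0 l)))\<^sup>2 \<partial>M) = 0"
      using integral_nonneg_eq_0_iff_AE[OF intr[OF f(1)]] by simp
    then have "carleson_form M f f = 0" using form_eq[OF f(1)] by simp
    then show "\<not> H_strictly_positive M"
      using f(1,2) unfolding H_strictly_positive_def by force
  qed
qed

end
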